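(* Let $(\Gamma,c)$ be a real congruence group and let $\gamma\in\Gamma$ be admissible. Then $C_\gamma$ contains two cusps of $\Gamma$, and $C_\gamma$ is homeomorphic to a closed interval.
   Context: $\mathfrak{h}$ is the upper half-plane. A complex conjugation is an anti-holomorphic involution $c$ of $\mathfrak{h}$; it extends to $\mathfrak{h}\cup\mathbf{R}\mathbf{P}^1$. For $\gamma\in\mathrm{PSL}_2(\mathbf{R})$, $\gamma^c=c\gamma c$. A real congruence group is a pair $(\Gamma,c)$ with $\Gamma\subseteq\mathrm{PSL}_2(\mathbf{Z})$, $c$ a complex conjugation with $\Gamma^c=\Gamma$, and such that for some $N\ge1$, $\Gamma$ contains $\Gamma(N)$ (image of matrices $\equiv I\bmod N$) and $\Gamma(N)^c=\Gamma(N)$. The cusps of $\Gamma$ are the points of $\mathbf{Q}\mathbf{P}^1$, and $\mathfrak{h}^*=\mathfrak{h}\cup\mathbf{Q}\mathbf{P}^1$. An element $\gamma\in\Gamma$ is admissible if $\gamma^c=\gamma^{-1}$, and $C_\gamma=\{z\in\mathfrak{h}^*:\gamma z=cz\}$. *)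

theory Defs
  imports "HOL-Analysis.Analysis"
begin

text \<open>Points of the closure of the upper half-plane in the Riemann sphere,
  i.e. of h \<union> RP^1, are represented by complex options: None is the point
  at infinity and Some z a point with Im z \<ge> 0.\<close>

definition uhp :: "complex set" where
  "uhp = {z. Im z > 0}"

definition cusps :: "complex option set" where
  "cusps = insert None {Some (complex_of_real (real_of_rat q)) | q. True}"

definition hstar :: "complex option set" where
  "hstar = Some ` uhp \<union> cusps"

text \<open>Topology on h \<union> RP^1: transported from the closed unit disc by the
  Cayley transform (a homeomorphism of h \<union> RP^1 onto the closed disc).\<close>

definition cay :: "complex option \<Rightarrow> complex" where
  "cay x = (case x of None \<Rightarrow> 1 | Some z \<Rightarrow> (z - \<i>) / (z + \<i>))"

definition icay :: "complex \<Rightarrow> complex option" where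
  "icay w = (if w = 1 then None else Some (\<i> * (1 + w) / (1 - w)))"

text \<open>A matrix ((a,b),(c,d)) is written as the quadruple (a,b,c,d).
  Subgroups of PSL2(Z) are represented by their full preimages in SL2(Z).\<close>

type_synonym mat2 = "int \<times> int \<times> int \<times> int"

fun mdet :: "mat2 \<Rightarrow> int" where
  "mdet (a,b,c,d) = a*d - b*c"

fun mmul :: "mat2 \<Rightarrow> mat2 \<Rightarrow> mat2" where
  "mmul (a,b,c,d) (a',b',c',d') = (a*a'+b*c', a*b'+b*d', c*a'+d*c', c*b'+d*d')"

fun minv :: "mat2 \<Rightarrow> mat2" where
  "minv (a,b,c,d) = (d, -b, -c, a)"

fun mneg :: "mat2 \<Rightarrow> mat2" where
  "mneg (a,b,c,d) = (-a, -b, -c, -d)"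

definition mid :: mat2 where "mid = (1,0,0,1)"

definition SL2Z :: "mat2 set" where
  "SL2Z = {M. mdet M = 1}"

definition psl2z_subgroup :: "mat2 set \<Rightarrow> bool" where
  "psl2z_subgroup G \<longleftrightarrow> G \<subseteq> SL2Z \<and> mid \<in> G \<and>
     (\<forall>M\<in>G. mneg M \<in> G) \<and> (\<forall>M\<in>G. minv M \<in> G) \<and>
     (\<forall>M\<in>G. \<forall>M'\<in>G. mmul M M' \<in> G)"

fun mcong :: "int \<Rightarrow> mat2 \<Rightarrow> mat2 \<Rightarrow> bool" where
  "mcong N (a,b,c,d) (a',b',c',d') \<longleftrightarrow>
     N dvd (a - a') \<and> N dvd (b - b') \<and> N dvd (c - c') \<and> N dvd (d - d')"

text \<open>Preimage in SL2(Z) of the image of Gamma(N) in PSL2(Z).\<close>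
definition GammaN :: "nat \<Rightarrow> mat2 set" where
  "GammaN N = {M \<in> SL2Z. mcong (int N) M mid \<or> mcong (int N) M (mneg mid)}"

fun mob :: "mat2 \<Rightarrow> complex \<Rightarrow> complex" where
  "mob (a,b,c,d) z = (of_int a * z + of_int b) / (of_int c * z + of_int d)"

fun mobx :: "mat2 \<Rightarrow> complex option \<Rightarrow> complex option" where
  "mobx (a,b,c,d) None = (if c = 0 then None else Some (of_int a / of_int c))"
| "mobx (a,b,c,d) (Some z) =
     (if of_int c * z + of_int d = 0 then None
      else Some ((of_int a * z + of_int b) / (of_int c * z + of_int d)))"

text \<open>An anti-holomorphic involution of h (only its values on h matter).\<close>
definition complex_conjugation :: "(complex \<Rightarrow> complex) \<Rightarrow> bool" where
  "complex_conjugation c \<longleftrightarrow>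
     (\<forall>z\<in>uhp. c z \<in> uhp) \<and> (\<forall>z\<in>uhp. c (c z) = z) \<and>
     (\<lambda>z. cnj (c z)) holomorphic_on uhp"

text \<open>The (continuous) extension of c to h \<union> RP^1, obtained by taking limits
  from h (in the topology transported by the Cayley transform).\<close>
definition cext :: "(complex \<Rightarrow> complex) \<Rightarrow> complex option \<Rightarrow> complex option" where
  "cext c x = (case x of
      Some z \<Rightarrow> (if z \<in> uhp then Some (c z)
                 else icay (Lim (at (cay x) within ball 0 1)
                                (\<lambda>w. cay (Some (c (the (icay w)))))))
    | None \<Rightarrow> icay (Lim (at (cay x) within ball 0 1)
                         (\<lambda>w. cay (Some (c (the (icay w)))))))"

text \<open>Gamma^c = Gamma, as sets of transformations of h.\<close>
definition conj_stable :: "(complex \<Rightarrow> complex) \<Rightarrow> mat2 set \<Rightarrow> bool" where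
  "conj_stable c G \<longleftrightarrow>
     (\<forall>M\<in>G. \<exists>M'\<in>G. \<forall>z\<in>uhp. c (mob M (c z)) = mob M' z) \<and>
     (\<forall>M'\<in>G. \<exists>M\<in>G. \<forall>z\<in>uhp. c (mob M (c z)) = mob M' z)"

definition real_congruence_group :: "mat2 set \<Rightarrow> (complex \<Rightarrow> complex) \<Rightarrow> bool" where
  "real_congruence_group G c \<longleftrightarrow>
     psl2z_subgroup G \<and> complex_conjugation c \<and> conj_stable c G \<and>
     (\<exists>N::nat. N \<ge> 1 \<and> GammaN N \<subseteq> G \<and> conj_stable c (GammaN N))"

text \<open>gamma is admissible: gamma^c = gamma^{-1} (as transformations of h).\<close>
definition admissible :: "mat2 set \<Rightarrow> (complex \<Rightarrow> complex) \<Rightarrow> mat2 \<Rightarrow> bool" where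
  "admissible G c M \<longleftrightarrow> M \<in> G \<and> (\<forall>z\<in>uhp. c (mob M (c z)) = mob (minv M) z)"

definition Cgamma :: "(complex \<Rightarrow> complex) \<Rightarrow> mat2 \<Rightarrow> complex option set" where
  "Cgamma c M = {x \<in> hstar. mobx M x = cext c x}"

end

theory Submission
  imports Defs "HOL-Complex_Analysis.Complex_Analysis" "HOL-Computational_Algebra.Nth_Powers"
begin

type_synonym rmat = "real \<times> real \<times> real \<times> real"

fun rmob :: "rmat \<Rightarrow> complex \<Rightarrow> complex" where
  "rmob (a,b,c,d) z = (of_real a * z + of_real b) / (of_real c * z + of_real d)"
fun rmul :: "rmat \<Rightarrow> rmat \<Rightarrow> rmat" where
  "rmul (a,b,c,d) (a',b',c',d') = (a*a'+b*c', a*b'+b*d', c*a'+d*c', c*b'+d*d')"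
fun rdet :: "rmat \<Rightarrow> real" where
  "rdet (a,b,c,d) = a*d - b*c"
fun ofm :: "mat2 \<Rightarrow> rmat" where
  "ofm (a,b,c,d) = (of_int a, of_int b, of_int c, of_int d)"

lemma mob_ofm: "mob M z = rmob (ofm M) z"
  by (cases M) simp

lemma rdet_ofm: "rdet (ofm M) = of_int (mdet M)"
  by (cases M) simp

lemma rdet_rmul: "rdet (rmul M N) = rdet M * rdet N"
  by (cases M; cases N) (simp add: algebra_simps)

lemma denom_nz:
  assumes "Im z \<noteq> 0" "a*d - b*c \<noteq> (0::real)"
  shows "of_real c * z + of_real d \<noteq> 0"
proof
  assume h: "of_real c * z + of_real d = 0"
  then have "Im (of_real c * z + of_real d) = 0" by simp
  then have "c = 0" using assms(1) by simp
  with h have "d = 0" by simp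
  with \<open>c = 0\<close> assms(2) show False by simp
qed

lemma Im_rmob:
  "Im (rmob (a,b,c,d) z) = (a*d - b*c) * Im z / (cmod (of_real c * z + of_real d))^2"
proof -
  have "Im (rmob (a,b,c,d) z) = (Im (of_real a * z + of_real b) * Re (of_real c * z + of_real d)
      - Re (of_real a * z + of_real b) * Im (of_real c * z + of_real d)) / (cmod (of_real c * z + of_real d))^2"
    by (simp add: Im_divide cmod_power2)
  also have "Im (of_real a * z + of_real b) * Re (of_real c * z + of_real d)
      - Re (of_real a * z + of_real b) * Im (of_real c * z + of_real d) = (a*d - b*c) * Im z"
    by (simp add: algebra_simps)
  finally show ?thesis .
qed

lemma Im_rmob_pos:
  assumes "Im z > 0" "a*d - b*c > 0"
  shows "Im (rmob (a,b,c,d) z) > 0"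
proof -
  have "of_real c * z + of_real d \<noteq> 0" using denom_nz[of z a d b c] assms by auto
  then show ?thesis unfolding Im_rmob using assms by simp
qed

lemma cnj_rmob: "cnj (rmob M z) = rmob M (cnj z)"
  by (cases M) simp

lemma rmob_mul:
  assumes "Im z \<noteq> 0" "rdet M \<noteq> 0" "rdet N \<noteq> 0"
  shows "rmob M (rmob N z) = rmob (rmul M N) z"
proof -
  obtain a b c d where M: "M = (a,b,c,d)" by (cases M) auto
  obtain a' b' c' d' where N: "N = (a',b',c',d')" by (cases N) auto
  have n1: "of_real c' * z + of_real d' \<noteq> 0" using denom_nz assms M N by auto
  have "Im (rmob N z) \<noteq> 0" using assms n1 unfolding N Im_rmob by auto
  then have n2: "of_real c * rmob N z + of_real d \<noteq> 0" using denom_nz assms M by auto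
  have dd: "(a*a'+b*c')*(c*b'+d*d') - (a*b'+b*d')*(c*a'+d*c') = (a*d-b*c)*(a'*d'-b'*c')"
    by algebra
  have "(a*a'+b*c')*(c*b'+d*d') - (a*b'+b*d')*(c*a'+d*c') \<noteq> 0"
    unfolding dd using assms M N by simp
  then have n3: "of_real (c*a'+d*c') * z + of_real (c*b'+d*d') \<noteq> 0"
    using denom_nz[of z "a*a'+b*c'" "c*b'+d*d'" "a*b'+b*d'" "c*a'+d*c'"] assms by blast
  have e: "of_real c * rmob N z + of_real d = (of_real (c*a'+d*c') * z + of_real (c*b'+d*d')) / (of_real c' * z + of_real d')"
    using n1 by (simp add: N field_simps)
  have "rmob M (rmob N z) = (of_real a * rmob N z + of_real b) / (of_real c * rmob N z + of_real d)"
    by (simp add: M)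
  also have "of_real a * rmob N z + of_real b = (of_real (a*a'+b*c') * z + of_real (a*b'+b*d')) / (of_real c' * z + of_real d')"
    using n1 by (simp add: N field_simps)
  finally show ?thesis using n1 n3 e by (simp add: M N)
qed

lemma rmob_scale:
  assumes "k \<noteq> 0"
  shows "rmob (k*a,k*b,k*c,k*d) z = rmob (a,b,c,d) z"
proof -
  have "rmob (k*a,k*b,k*c,k*d) z = (of_real k * (of_real a * z + of_real b)) / (of_real k * (of_real c * z + of_real d))"
    by (simp add: algebra_simps)
  also have "\<dots> = rmob (a,b,c,d) z" using assms by simp
  finally show ?thesis .
qed

lemma rmob_id:
  assumes "\<forall>z\<in>uhp. rmob (a,b,c,d) z = z" "a*d - b*c \<noteq> 0"
  shows "c = 0 \<and> b = 0 \<and> a = d"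
proof -
  have iu: "\<i> \<in> uhp" and i2: "2*\<i> \<in> uhp" by (auto simp: uhp_def)
  have n1: "of_real c * \<i> + of_real d \<noteq> 0" using denom_nz[of \<i> a d b c] assms by auto
  have n2: "of_real c * (2*\<i>) + of_real d \<noteq> 0" using denom_nz[of "2*\<i>" a d b c] assms by auto
  have "rmob (a,b,c,d) \<i> = \<i>" using assms iu by blast
  then have e1: "of_real a * \<i> + of_real b = \<i> * (of_real c * \<i> + of_real d)" using n1
    by (simp add: field_simps)
  have "rmob (a,b,c,d) (2*\<i>) = 2*\<i>" using assms i2 by blast
  then have e2: "of_real a * (2*\<i>) + of_real b = (2*\<i>) * (of_real c * (2*\<i>) + of_real d)" using n2
    by (simp add: field_simps)
  from e1 have r1: "b = -c" "a = d" by (auto simp: complex_eq_iff)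
  from e2 have r2: "b = -4*c" by (auto simp: complex_eq_iff)
  from r1 r2 show ?thesis by auto
qed

lemma rmob_eq:
  assumes "\<forall>z\<in>uhp. rmob (m1,m2,m3,m4) z = rmob (n1,n2,n3,n4) z"
    "m1*m4 - m2*m3 \<noteq> 0" "n1*n4 - n2*n3 \<noteq> 0"
  shows "\<exists>k. n1 = k*m1 \<and> n2 = k*m2 \<and> n3 = k*m3 \<and> n4 = k*m4"
proof -
  have iu: "\<i> \<in> uhp" and i2: "2*\<i> \<in> uhp" by (auto simp: uhp_def)
  have eq: "(of_real m1 * z + of_real m2) * (of_real n3 * z + of_real n4) =
            (of_real n1 * z + of_real n2) * (of_real m3 * z + of_real m4)" if "z \<in> uhp" for z
  proof -
    have "Im z \<noteq> 0" using that by (simp add: uhp_def)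
    then have "of_real m3 * z + of_real m4 \<noteq> 0" "of_real n3 * z + of_real n4 \<noteq> 0"
      using denom_nz assms by auto
    then show ?thesis using assms(1) that by (auto simp: field_simps)
  qed
  from eq[OF iu] have A: "m2*n4 - n2*m4 - (m1*n3 - n1*m3) = 0" "m1*n4 + m2*n3 - n1*m4 - n2*m3 = 0"
    by (auto simp: complex_eq_iff algebra_simps)
  from eq[OF i2] have B: "m2*n4 - n2*m4 - 4*(m1*n3 - n1*m3) = 0"
    by (auto simp: complex_eq_iff algebra_simps)
  have lin: "X = 0 \<and> Y = 0" if "X - Y = 0" "X - 4*Y = 0" for X Y :: real using that by linarith
  have "m1*n3 - n1*m3 = 0 \<and> m2*n4 - n2*m4 = 0" using lin[OF A(1) B] by simp
  then have "m1*n3 - n1*m3 = 0" "m2*n4 - n2*m4 = 0" by auto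
  then have C1: "m1*n3 = n1*m3" "m2*n4 = n2*m4" by auto
  define D where "D = m1*m4 - m2*m3"
  define l where "l = m4*n1 - m2*n3"
  define S where "S = m1*n4 + m2*n3 - n1*m4 - n2*m3"
  have S0: "S = 0" using A(2) unfolding S_def by simp
  have i1: "D * n1 - l * m1 = m2 * (m1*n3 - n1*m3)" unfolding D_def l_def by algebra
  have i2: "D * n2 - l * m2 = m1*(m4*n2 - m2*n4) + m2*S" unfolding D_def l_def S_def by algebra
  have i3: "D * n3 - l * m3 = m4*(m1*n3 - n1*m3)" unfolding D_def l_def by algebra
  have i4: "D * n4 - l * m4 = m3*(m4*n2 - m2*n4) + m4*S" unfolding D_def l_def S_def by algebra
  have z1: "m1*n3 - n1*m3 = 0" "m4*n2 - m2*n4 = 0" using C1 by (auto simp: algebra_simps)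
  have "D * n1 = l * m1" "D * n2 = l * m2" "D * n3 = l * m3" "D * n4 = l * m4"
    using i1 i2 i3 i4 z1 S0 by auto
  then show ?thesis using assms(2) unfolding D_def[symmetric]
    by (intro exI[of _ "l/D"]) (auto simp: field_simps)
qed

definition K :: "complex \<Rightarrow> complex" where "K z = (z - \<i>) / (z + \<i>)"
definition Ki :: "complex \<Rightarrow> complex" where "Ki w = \<i> * (1 + w) / (1 - w)"

lemma uhp_ne_mi: "z \<in> uhp \<Longrightarrow> z + \<i> \<noteq> 0"
  by (auto simp: uhp_def complex_eq_iff)

lemma K_ball: assumes "z \<in> uhp" shows "K z \<in> ball 0 1"
proof -
  have n: "z + \<i> \<noteq> 0" using uhp_ne_mi assms .
  have e1: "(cmod (z - \<i>))^2 = (Re z)^2 + (Im z - 1)^2" by (simp add: cmod_power2)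
  have e2: "(cmod (z + \<i>))^2 = (Re z)^2 + (Im z + 1)^2" by (simp add: cmod_power2)
  have "(cmod (z - \<i>))^2 < (cmod (z + \<i>))^2"
    using assms unfolding e1 e2 by (simp add: uhp_def power2_eq_square algebra_simps)
  then have "cmod (z - \<i>) < cmod (z + \<i>)"
    by (meson norm_ge_zero power_less_imp_less_base)
  then show ?thesis using n by (simp add: K_def norm_divide divide_less_eq)
qed

lemma Ki_uhp: assumes "w \<in> ball 0 1" shows "Ki w \<in> uhp"
proof -
  have n: "1 - w \<noteq> 0" using assms by auto
  have "Im (Ki w) = (1 - (Re w)^2 - (Im w)^2) / ((Re (1 - w))^2 + (Im (1-w))^2)"
    by (simp add: Ki_def Im_divide power2_eq_square algebra_simps)
  moreover have "(cmod w)^2 < 1" using assms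
    by (simp add: abs_square_less_1)
  then have "(Re w)^2 + (Im w)^2 < 1" by (simp add: cmod_power2)
  moreover have "(Re (1 - w))^2 + (Im (1-w))^2 > 0" using n
    by (simp add: complex_eq_iff) (metis add_pos_nonneg add_nonneg_pos zero_less_power2 zero_le_power2 eq_iff_diff_eq_0 right_minus_eq)
  ultimately show ?thesis by (simp add: uhp_def)
qed

lemma K_Ki: "w \<noteq> 1 \<Longrightarrow> K (Ki w) = w"
  by (simp add: K_def Ki_def field_simps)

lemma Ki_K: assumes "z + \<i> \<noteq> 0" shows "Ki (K z) = z"
proof -
  have a: "1 + K z = 2*z/(z+\<i>)" "1 - K z = 2*\<i>/(z+\<i>)" using assms
    by (simp_all add: K_def field_simps)
  have "\<i> * (z * 2) - 2 = 2*\<i>*(z+\<i>)" by (simp add: algebra_simps)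
  then have nz: "\<i> * (z * 2) - 2 \<noteq> 0" using assms by simp
  have "\<i> * (z * (z * 2)) - z * 2 = z * (\<i> * (z * 2) - 2)" by (simp add: algebra_simps)
  then show ?thesis unfolding Ki_def a using assms nz by (simp add: field_simps)
qed

lemma cnjK: "cnj (K z) = (cnj z + \<i>)/(cnj z - \<i>)"  by (simp add: K_def)

lemma conj_disc:
  assumes cc: "complex_conjugation c"
  shows "\<exists>\<alpha> a0. cmod \<alpha> = 1 \<and> cmod a0 < 1 \<and>
     (\<forall>u\<in>uhp. c u = Ki (cnj ((\<alpha> * K u + a0) / (1 + cnj a0 * \<alpha> * K u))))"
proof -
  have cu: "\<And>z. z \<in> uhp \<Longrightarrow> c z \<in> uhp" and cinv: "\<And>z. z \<in> uhp \<Longrightarrow> c (c z) = z"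
    and hphi: "(\<lambda>z. cnj (c z)) holomorphic_on uhp"
    using cc unfolding complex_conjugation_def by auto
  define F where "F w = cnj (K (c (Ki w)))" for w
  define G where "G w = cnj (F (cnj w))" for w
  have Fball: "F w \<in> ball 0 1" if "w \<in> ball 0 1" for w
    using K_ball[OF cu[OF Ki_uhp[OF that]]] by (simp add: F_def)
  have hKi: "Ki holomorphic_on ball 0 1"
    unfolding Ki_def by (intro holomorphic_intros) auto
  have h1: "(\<lambda>w. cnj (c (Ki w))) holomorphic_on ball 0 1"
  proof -
    have "Ki ` ball 0 1 \<subseteq> uhp" using Ki_uhp by blast
    from holomorphic_on_compose_gen[OF hKi hphi this] show ?thesis by (simp add: o_def)
  qed
  have h2: "(\<lambda>w. (cnj (c (Ki w)) + \<i>) / (cnj (c (Ki w)) - \<i>)) holomorphic_on ball 0 1"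
  proof (intro holomorphic_intros h1)
    fix w :: complex assume "w \<in> ball 0 1"
    then have "Im (c (Ki w)) > 0" using cu Ki_uhp by (auto simp: uhp_def)
    then show "cnj (c (Ki w)) - \<i> \<noteq> 0" by (auto simp: complex_eq_iff)
  qed
  have holF: "F holomorphic_on ball 0 1"
    by (rule holomorphic_transform[OF h2]) (simp add: F_def cnjK)
  have holG: "G holomorphic_on ball 0 1"
    unfolding holomorphic_on_def
  proof
    fix w :: complex assume w: "w \<in> ball 0 1"
    then have "cnj w \<in> ball 0 1" by simp
    then have "F field_differentiable (at (cnj w))"
      using holomorphic_on_imp_differentiable_at[OF holF] by auto
    then have "(cnj \<circ> F \<circ> cnj) field_differentiable (at w)"
      by (rule field_differentiable_cnj_cnj)
    moreover have "cnj \<circ> F \<circ> cnj = G" by (auto simp: G_def)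
    ultimately show "G field_differentiable (at w within ball 0 1)"
      using field_differentiable_at_within by auto
  qed
  have FG: "F (cnj (F (cnj w))) = w" if w: "w \<in> ball 0 1" for w
  proof -
    have cw: "cnj w \<in> ball 0 1" using w by simp
    define y where "y = c (Ki (cnj w))"
    have y: "y \<in> uhp" unfolding y_def using cu Ki_uhp[OF cw] by auto
    have "cnj (F (cnj w)) = K y" by (simp add: F_def y_def)
    then have "F (cnj (F (cnj w))) = cnj (K (c (Ki (K y))))" by (simp add: F_def)
    also have "Ki (K y) = y" using Ki_K uhp_ne_mi[OF y] by simp
    also have "c y = Ki (cnj w)" unfolding y_def using cinv Ki_uhp[OF cw] by simp
    also have "K (Ki (cnj w)) = cnj w" using K_Ki cw by (metis mem_ball_0 norm_one order_less_irrefl)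
    finally show ?thesis by simp
  qed
  have GF: "G (F w) = w" if w: "w \<in> ball 0 1" for w
  proof -
    have "F (cnj (F (cnj (cnj w)))) = cnj w" using FG[of "cnj w"] w by simp
    then show ?thesis by (simp add: G_def)
  qed
  have FG2: "F (G w) = w" if w: "w \<in> ball 0 1" for w
    using FG[OF w] by (simp add: G_def)
  have Gball: "G w \<in> ball 0 1" if "w \<in> ball 0 1" for w
    using Fball[of "cnj w"] that by (simp add: G_def)
  define a0 where "a0 = F 0"
  have a0: "cmod a0 < 1" using Fball[of 0] by (simp add: a0_def)
  define H where "H = Moebius_function 0 a0 \<circ> F"
  define Hi where "Hi = G \<circ> Moebius_function 0 (-a0)"
  have holH: "H holomorphic_on ball 0 1" unfolding H_def
    by (rule holomorphic_on_compose_gen[OF holF Moebius_function_holomorphic]) (use a0 Fball in auto)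
  have holHi: "Hi holomorphic_on ball 0 1" unfolding Hi_def
    by (rule holomorphic_on_compose_gen[OF Moebius_function_holomorphic holG])
       (use a0 Moebius_function_norm_lt_1 in auto)
  have H0: "H 0 = 0" by (simp add: H_def a0_def Moebius_function_eq_zero)
  have Hi0: "Hi 0 = 0"
  proof -
    have "Moebius_function 0 (-a0) 0 = a0" by (simp add: Moebius_function_of_zero)
    then show ?thesis using GF[of 0] by (simp add: Hi_def a0_def)
  qed
  have Hb: "cmod (H z) < 1" if "cmod z < 1" for z
    using that Fball[of z] Moebius_function_norm_lt_1[OF a0] by (simp add: H_def)
  have Hib: "cmod (Hi z) < 1" if "cmod z < 1" for z
  proof -
    have "cmod (Moebius_function 0 (-a0) z) < 1" using that a0 Moebius_function_norm_lt_1 by simp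
    then show ?thesis using Gball by (simp add: Hi_def)
  qed
  have HiH: "Hi (H z) = z" if "cmod z < 1" for z
  proof -
    have "Moebius_function 0 (-a0) (Moebius_function 0 a0 (F z)) = F z"
      using Moebius_function_compose[of "-a0" a0 "F z"] a0 Fball[of z] that by simp
    then show ?thesis using GF[of z] that by (simp add: H_def Hi_def)
  qed
  have le1: "cmod (H z) \<le> cmod z" if "cmod z < 1" for z
    using Schwarz_Lemma(1)[OF holH H0 Hb that] .
  have le2: "cmod z \<le> cmod (H z)" if "cmod z < 1" for z
    using Schwarz_Lemma(1)[OF holHi Hi0 Hib Hb[OF that]] HiH[OF that] by simp
  have "\<exists>\<alpha>. (\<forall>z. cmod z < 1 \<longrightarrow> H z = \<alpha> * z) \<and> cmod \<alpha> = 1"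
    apply (rule Schwarz_Lemma(3)[OF holH H0 Hb, of "1/2"])
    using le1[of "1/2"] le2[of "1/2"] by (auto intro!: exI[of _ "1/2"])
  then obtain \<alpha> where al: "\<And>z. cmod z < 1 \<Longrightarrow> H z = \<alpha> * z" and al1: "cmod \<alpha> = 1" by blast
  have Fform: "F z = (\<alpha> * z + a0) / (1 + cnj a0 * \<alpha> * z)" if "cmod z < 1" for z
  proof -
    have "F z = Moebius_function 0 (-a0) (H z)"
      using Moebius_function_compose[of "-a0" a0 "F z"] a0 Fball[of z] that by (simp add: H_def)
    also have "\<dots> = (\<alpha> * z + a0) / (1 + cnj a0 * \<alpha> * z)"
      using al[OF that] by (simp add: Moebius_function_def)
    finally show ?thesis .
  qed
  have "c u = Ki (cnj ((\<alpha> * K u + a0) / (1 + cnj a0 * \<alpha> * K u)))" if u: "u \<in> uhp" for u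
  proof -
    have Ku: "cmod (K u) < 1" using K_ball[OF u] by simp
    have "F (K u) = cnj (K (c u))" using Ki_K uhp_ne_mi[OF u] by (simp add: F_def)
    then have "K (c u) = cnj (F (K u))" by simp
    then have "Ki (K (c u)) = Ki (cnj (F (K u)))" by simp
    moreover have "Ki (K (c u)) = c u" using Ki_K uhp_ne_mi cu u by auto
    ultimately show ?thesis using Fform[OF Ku] by simp
  qed
  then show ?thesis using al1 a0 by blast
qed

lemma real_of_cnj_eq: "cnj x = x \<Longrightarrow> complex_of_real (Re x) = x"
  proof -
  assume "cnj x = x"
  then have "Im (cnj x) = Im x" by simp
  then have "Im x = 0" by simp
  then show ?thesis by (simp add: complex_eq_iff)
qed

lemma conj_real_form0:
  assumes cc: "complex_conjugation c"
  shows "\<exists>B. \<forall>u\<in>uhp. c u = rmob B (cnj u)"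
proof -
  have cu: "\<And>z. z \<in> uhp \<Longrightarrow> c z \<in> uhp" using cc unfolding complex_conjugation_def by auto
  obtain \<alpha> a0 where al: "cmod \<alpha> = 1" and a0: "cmod a0 < 1"
    and cf: "\<And>u. u \<in> uhp \<Longrightarrow> c u = Ki (cnj ((\<alpha> * K u + a0) / (1 + cnj a0 * \<alpha> * K u)))"
    using conj_disc[OF cc] by blast
  define \<mu> where "\<mu> = csqrt \<alpha>"
  define \<mu>' where "\<mu>' = cnj \<mu>"
  define a' where "a' = cnj a0"
  have mal: "\<mu>^2 = \<alpha>" by (simp add: \<mu>_def)
  have "cmod \<mu> ^ 2 = 1" using al mal by (metis norm_power)
  then have mm: "\<mu> * \<mu>' = 1" unfolding \<mu>'_def
    by (metis complex_norm_square of_real_1)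
  have cal: "cnj \<alpha> = \<mu>'^2" using mal by (auto simp: \<mu>'_def)
  define X1 where "X1 = \<mu> + \<mu>' + a0*\<mu>' + a'*\<mu>"
  define X2 where "X2 = \<i>*(\<mu>' - \<mu> + a0*\<mu>' - \<mu>*a')"
  define X3 where "X3 = -\<i>*(\<mu> + a0*\<mu>' - \<mu>' - \<mu>*a')"
  define X4 where "X4 = -\<mu> + a0*\<mu>' - \<mu>' + \<mu>*a'"
  have r1: "of_real (Re X1) = X1" by (rule real_of_cnj_eq) (simp add: X1_def \<mu>'_def a'_def algebra_simps)
  have r2: "of_real (Re X2) = X2" by (rule real_of_cnj_eq) (simp add: X2_def \<mu>'_def a'_def algebra_simps)
  have r3: "of_real (Re X3) = X3" by (rule real_of_cnj_eq) (simp add: X3_def \<mu>'_def a'_def algebra_simps)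
  have r4: "of_real (Re X4) = X4" by (rule real_of_cnj_eq) (simp add: X4_def \<mu>'_def a'_def algebra_simps)
  have main: "c u = rmob (Re X1, Re X2, Re X3, Re X4) (cnj u)" if u: "u \<in> uhp" for u
  proof -
    define v where "v = cnj u"
    define P where "P = v - \<i>"
    define cw where "cw = cnj (K u)"
    define Q where "Q = 1 + a0 * \<mu>'^2 * cw"
    define s where "s = cnj ((\<alpha> * K u + a0) / (1 + cnj a0 * \<alpha> * K u))"
    have P0: "P \<noteq> 0" using u by (auto simp: P_def v_def uhp_def complex_eq_iff)
    have cwP: "P * cw = v + \<i>" using P0 by (simp add: cw_def cnjK P_def v_def)
    have Ku: "cmod (K u) < 1" using K_ball[OF u] by simp
    have "cmod (cnj a0 * \<alpha> * K u) < 1"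
      using Ku a0 al by (simp add: norm_mult) (metis mult_strict_mono' norm_ge_zero mult_1 less_le_not_le)
    then have "1 + cnj a0 * \<alpha> * K u \<noteq> 0"
      by (metis add.inverse_unique norm_minus_cancel norm_one order_less_irrefl)
    then have Q0: "Q \<noteq> 0" unfolding Q_def cw_def using cal by (metis complex_cnj_add complex_cnj_mult complex_cnj_one complex_cnj_zero_iff a'_def complex_cnj_cnj mult.commute mult.left_commute)
    have sQ: "Q * s = \<mu>'^2 * cw + a'"
    proof -
      have "s = (\<mu>'^2 * cw + a') / Q" unfolding s_def Q_def cw_def a'_def
        using cal by (simp add: mult.commute mult.left_commute)
      then show ?thesis using Q0 by simp
    qed
    have cus: "c u = Ki s" unfolding s_def using cf[OF u] .
    have s1: "s \<noteq> 1"
    proof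
      assume "s = 1"
      then have "c u = 0" using cus by (simp add: Ki_def)
      then show False using cu[OF u] by (simp add: uhp_def)
    qed
    have e1: "P*Q*(1+s) = P + a0*\<mu>'^2*(v+\<i>) + \<mu>'^2*(v+\<i>) + a'*P"
    proof -
      have "P * Q * (1 + s) = P * Q + P * (Q * s)" by (simp add: algebra_simps)
      also have "\<dots> = P + a0*\<mu>'^2*(P*cw) + \<mu>'^2*(P*cw) + a'*P" by (subst sQ) (simp add: Q_def algebra_simps)
      finally show ?thesis unfolding cwP .
    qed
    have e2: "P*Q*(1-s) = P + a0*\<mu>'^2*(v+\<i>) - \<mu>'^2*(v+\<i>) - a'*P"
    proof -
      have "P * Q * (1 - s) = P * Q - P * (Q * s)" by (simp add: algebra_simps)
      also have "\<dots> = P + a0*\<mu>'^2*(P*cw) - \<mu>'^2*(P*cw) - a'*P" by (subst sQ) (simp add: Q_def algebra_simps)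
      finally show ?thesis unfolding cwP .
    qed
    have i1: "X1 * v + X2 = \<mu> * (P + a0*\<mu>'^2*(v+\<i>) + \<mu>'^2*(v+\<i>) + a'*P)"
      unfolding X1_def X2_def P_def using mm i_squared by algebra
    have i2: "X3 * v + X4 = -\<i> * \<mu> * (P + a0*\<mu>'^2*(v+\<i>) - \<mu>'^2*(v+\<i>) - a'*P)"
      unfolding X3_def X4_def P_def using mm i_squared by algebra
    have mu0: "\<mu> \<noteq> 0" using mm by auto
    have "c u = \<i> * (1 + s) / (1 - s)" using cus by (simp add: Ki_def)
    also have "\<dots> = (X1 * v + X2) / (X3 * v + X4)"
      unfolding i1 i2 e1[symmetric] e2[symmetric] using P0 Q0 mu0 s1
      by (simp add: field_simps)
    also have "\<dots> = rmob (Re X1, Re X2, Re X3, Re X4) (cnj u)"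
      by (simp add: r1 r2 r3 r4 v_def)
    finally show ?thesis .
  qed
  then show ?thesis by blast
qed

lemma conj_real_form:
  assumes cc: "complex_conjugation c"
  shows "\<exists>a b p d. a*d - b*p = -1 \<and> (\<forall>u\<in>uhp. c u = rmob (a,b,p,d) (cnj u))"
proof -
  obtain a b p d where B: "\<And>u. u \<in> uhp \<Longrightarrow> c u = rmob (a,b,p,d) (cnj u)"
    using conj_real_form0[OF cc] by (metis prod_cases4)
  have cu: "\<And>z. z \<in> uhp \<Longrightarrow> c z \<in> uhp" using cc unfolding complex_conjugation_def by auto
  have iu: "\<i> \<in> uhp" by (simp add: uhp_def)
  have "Im (rmob (a,b,p,d) (cnj \<i>)) > 0" using cu[OF iu] B[OF iu] by (simp add: uhp_def)
  then have "(a*d - b*p) * (-1) / (cmod (of_real p * (-\<i>) + of_real d))^2 > 0"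
    unfolding Im_rmob by simp
  then have neg: "a*d - b*p < 0"
    by (metis divide_le_0_iff mult_minus1_right neg_0_less_iff_less not_le zero_le_power2)
  define k where "k = 1 / sqrt (-(a*d - b*p))"
  have k0: "k \<noteq> 0" using neg by (simp add: k_def)
  have "k^2 = 1 / (-(a*d - b*p))" using neg by (simp add: k_def power_divide)
  then have "(k*a)*(k*d) - (k*b)*(k*p) = -1" using neg
    by (simp add: power2_eq_square field_simps)
  moreover have "\<forall>u\<in>uhp. c u = rmob (k*a,k*b,k*p,k*d) (cnj u)"
    using B rmob_scale[OF k0] by simp
  ultimately show ?thesis by blast
qed

lemma even_of_sq4: fixes T X :: int assumes "T^2 = 4*X" shows "even T"
proof (rule ccontr)
  assume "odd T"
  then have "odd (T^2)" by simp
  then show False using assms by simp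
qed

lemma int_div_lemma:
  fixes x y :: real
  assumes "x \<in> \<int>" "x \<noteq> 0" "x*y \<in> \<int>" "y^2 \<in> \<int>"
  shows "y \<in> \<int>"
proof -
  obtain X where X: "x = of_int X" using assms(1) Ints_cases by blast
  obtain T where T: "x*y = of_int T" using assms(3) Ints_cases by blast
  obtain Nn where Nn: "y^2 = of_int Nn" using assms(4) Ints_cases by blast
  have "(x*y)^2 = x^2 * y^2" by (simp add: power_mult_distrib)
  then have "real_of_int (T^2) = real_of_int (X^2 * Nn)" using X T Nn by simp
  then have "T^2 = X^2 * Nn" by (simp only: of_int_eq_iff)
  then have "X^2 dvd T^2" by simp
  then have "X dvd T" by simp
  then obtain Q where "T = X * Q" by blast
  then have "x*y = x * of_int Q" using X T by simp
  then have "y = of_int Q" using assms(2) by simp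
  then show ?thesis by simp
qed

lemma NT_real:
  fixes a b p :: real
  assumes a2: "a^2 \<in> \<int>" and b2: "b^2 \<in> \<int>" and p2: "p^2 \<in> \<int>"
    and ab2: "(a+b)^2 \<in> \<int>" and ap2: "(a-p)^2 \<in> \<int>" and rel: "a^2 + b*p = 1"
  shows "a \<in> \<int> \<and> b \<in> \<int> \<and> p \<in> \<int>"
proof (cases "a = 0")
  case True
  then have bp: "b*p = 1" using rel by simp
  obtain B2 where B2: "b^2 = of_int B2" using b2 Ints_cases by blast
  obtain P2 where P2: "p^2 = of_int P2" using p2 Ints_cases by blast
  have "(b*p)^2 = b^2*p^2" by (simp add: power_mult_distrib)
  then have "real_of_int (B2*P2) = 1" using bp B2 P2 by simp
  then have "B2*P2 = 1" by linarith
  moreover have "B2 \<ge> 0" using B2 by (metis of_int_0_le_iff zero_le_power2)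
  ultimately have "B2 = 1" using pos_zmult_eq_1_iff zero_less_mult_iff
    by (metis int_one_le_iff_zero_less mult_cancel_left1 order_le_less zmult_eq_1_iff)
  then have "b^2 = 1" using B2 by simp
  then have "b = 1 \<or> b = -1" by (simp add: power2_eq_1_iff)
  moreover then have "p = b" using bp by auto
  ultimately show ?thesis using True by auto
next
  case False
  have t: "2*a*b \<in> \<int>"
  proof -
    have "2*a*b = (a+b)^2 - a^2 - b^2" by (simp add: power2_eq_square algebra_simps)
    then show ?thesis using a2 b2 ab2 by simp
  qed
  have t': "2*a*p \<in> \<int>"
  proof -
    have "2*a*p = a^2 + p^2 - (a-p)^2" by (simp add: power2_eq_square algebra_simps)
    then show ?thesis using a2 p2 ap2 by simp
  qed
  obtain M where M: "a^2 = of_int M" using a2 Ints_cases by blast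
  obtain Nn where Nn: "b^2 = of_int Nn" using b2 Ints_cases by blast
  obtain Kk where Kk: "p^2 = of_int Kk" using p2 Ints_cases by blast
  have half: "x*y \<in> \<int>" if h: "2*x*y \<in> \<int>" "x^2 \<in> \<int>" "y^2 \<in> \<int>" for x y :: real
  proof -
    obtain T where T: "2*x*y = of_int T" using h(1) Ints_cases by blast
    obtain X where X: "x^2 = of_int X" using h(2) Ints_cases by blast
    obtain Y where Y: "y^2 = of_int Y" using h(3) Ints_cases by blast
    have "(2*x*y)^2 = 4*(x^2*y^2)" by (simp add: power_mult_distrib)
    then have "real_of_int (T^2) = real_of_int (4*(X*Y))" using T X Y by simp
    then have "T^2 = 4*(X*Y)" by (simp only: of_int_eq_iff)
    then have "even T" by (rule even_of_sq4)
    then obtain T' where "T = 2*T'" by blast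
    then have "x*y = of_int T'" using T by simp
    then show ?thesis by simp
  qed
  have abZ: "a*b \<in> \<int>" using half[of a b] t a2 b2 by simp
  have apZ: "a*p \<in> \<int>" using half[of a p] t' a2 p2 by simp
  have aZ: "a \<in> \<int>"
  proof (cases "b = 0")
    case True
    then have "a^2 = 1" using rel by simp
    then have "a = 1 \<or> a = -1" by (simp add: power2_eq_1_iff)
    then show ?thesis by auto
  next
    case bnz: False
    obtain S where S: "a*b = of_int S" using abZ Ints_cases by blast
    have Mpos: "M > 0" using M False by (metis of_int_0_less_iff zero_less_power2)
    have Npos: "Nn > 0" using Nn bnz by (metis of_int_0_less_iff zero_less_power2)
    have "(a*b)^2 = a^2*b^2" by (simp add: power_mult_distrib)
    then have "real_of_int (S^2) = real_of_int (M*Nn)" using S M Nn by simp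
    then have SMN: "S^2 = M*Nn" by (simp only: of_int_eq_iff)
    have "(b*p)^2 = b^2*p^2" by (simp add: power_mult_distrib)
    moreover have "b*p = 1 - a^2" using rel by simp
    ultimately have "real_of_int ((1-M)^2) = real_of_int (Nn*Kk)" using M Nn Kk by simp
    then have NK: "(1-M)^2 = Nn*Kk" by (simp only: of_int_eq_iff)
    have "coprime M (1 - M)"
    proof -
      have "coprime (M - 1) M" by simp
      then have "coprime M (M - 1)" by (simp add: coprime_commute)
      then show ?thesis by (metis coprime_minus_right_iff minus_diff_eq)
    qed
    then have "coprime M ((1-M)^2)" by simp
    then have "coprime M (Nn*Kk)" using NK by simp
    then have cop: "coprime M Nn" by simp
    have cop': "coprime (nat M) (nat Nn)" using cop Mpos Npos
      by (metis coprime_int_iff int_nat_eq order_less_imp_le)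
    have "nat M * nat Nn = (nat \<bar>S\<bar>)^2" using SMN Mpos Npos
      by (metis abs_mult_self_eq nat_mult_distrib nat_power_eq order_less_imp_le power2_eq_square abs_ge_zero)
    then have "is_nth_power 2 (nat M * nat Nn)" by auto
    then have "is_nth_power 2 (nat M)" using is_nth_power_mult_coprime_natD(1)[OF cop'] Mpos Npos by auto
    then obtain r where r: "nat M = r^2" by (auto elim: is_nth_powerE)
    then have "a^2 = (real r)^2" using M Mpos by (metis of_int_of_nat_eq of_nat_power int_nat_eq order_less_imp_le)
    then have "a = real r \<or> a = - real r" by (metis power2_eq_iff)
    then show ?thesis by auto
  qed
  have "b \<in> \<int>" using int_div_lemma[OF aZ False abZ b2] .
  moreover have "p \<in> \<int>" using int_div_lemma[OF aZ False apZ p2] .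
  ultimately show ?thesis using aZ by simp
qed

lemma trace_zero:
  fixes a b p d :: real
  assumes "b*(a+d) = 0" "p*(a+d) = 0" "a*a = d*d" "a*d - b*p < 0"
  shows "d = -a"
proof (rule ccontr)
  assume "d \<noteq> -a"
  then have "a + d \<noteq> 0" by simp
  then have "b = 0" "p = 0" using assms(1,2) by auto
  then have ad: "a*d < 0" using assms(4) by simp
  have "(a-d)*(a+d) = 0" using assms(3) by (simp add: algebra_simps)
  then have "a = d" using \<open>a + d \<noteq> 0\<close> by simp
  then show False using ad by (simp add: mult_less_0_iff)
qed

lemma conjM:
  assumes cf: "\<forall>u\<in>uhp. c u = rmob B (cnj u)" and dB: "rdet B = -1"
    and cu: "\<forall>z\<in>uhp. c z \<in> uhp" and dM: "rdet M > 0" and z: "z \<in> uhp"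
  shows "c (rmob M (c z)) = rmob (rmul B (rmul M B)) z"
proof -
  obtain m1 m2 m3 m4 where M: "M = (m1,m2,m3,m4)" by (cases M) auto
  have cz: "c z \<in> uhp" using cu z by blast
  have "rmob M (c z) \<in> uhp" using Im_rmob_pos[of "c z" m1 m4 m2 m3] cz dM M by (simp add: uhp_def)
  then have "c (rmob M (c z)) = rmob B (cnj (rmob M (rmob B (cnj z))))" using cf z by simp
  also have "\<dots> = rmob B (rmob M (rmob B z))" by (simp add: cnj_rmob)
  also have "\<dots> = rmob B (rmob (rmul M B) z)"
    using rmob_mul[of z M B] z dM dB by (simp add: uhp_def)
  also have "\<dots> = rmob (rmul B (rmul M B)) z"
    using rmob_mul[of z B "rmul M B"] z dM dB by (simp add: uhp_def rdet_rmul)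
  finally show ?thesis .
qed

lemma B_integral:
  assumes rcg: "real_congruence_group G c"
  shows "\<exists>a b p::int. a*a + b*p = 1 \<and>
     (\<forall>u\<in>uhp. c u = rmob (of_int a, of_int b, of_int p, -of_int a) (cnj u))"
proof -
  have cc: "complex_conjugation c" using rcg by (simp add: real_congruence_group_def)
  have cu: "\<forall>z\<in>uhp. c z \<in> uhp" and cinv: "\<forall>z\<in>uhp. c (c z) = z"
    using cc by (auto simp: complex_conjugation_def)
  obtain a b p d where det: "a*d - b*p = -1" and cf: "\<forall>u\<in>uhp. c u = rmob (a,b,p,d) (cnj u)"
    using conj_real_form[OF cc] by blast
  define B where "B = (a,b,p,d)"
  have dB: "rdet B = -1" using det by (simp add: B_def)
  have cfB: "\<forall>u\<in>uhp. c u = rmob B (cnj u)" using cf by (simp add: B_def)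
  have "\<forall>z\<in>uhp. rmob (rmul B B) z = z"
  proof
    fix z assume z: "z \<in> uhp"
    have "c (c z) = rmob B (cnj (rmob B (cnj z)))" using cfB z cu by simp
    also have "\<dots> = rmob B (rmob B z)" by (simp add: cnj_rmob)
    also have "\<dots> = rmob (rmul B B) z" using rmob_mul[of z B B] z dB by (simp add: uhp_def)
    finally show "rmob (rmul B B) z = z" using cinv z by simp
  qed
  then have "\<forall>z\<in>uhp. rmob (a*a+b*p, a*b+b*d, p*a+d*p, p*b+d*d) z = z" by (simp add: B_def)
  from rmob_id[OF this] have "p*a+d*p = 0 \<and> a*b+b*d = 0 \<and> a*a+b*p = p*b+d*d"
    using dB rdet_rmul[of B B] by (simp add: B_def)
  then have h: "p*a+d*p = 0" "a*b+b*d = 0" "a*a+b*p = p*b+d*d" by auto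
  have "b*(a+d) = a*b+b*d" "p*(a+d) = p*a+d*p" by (simp_all add: algebra_simps)
  then have h1: "b*(a+d) = 0" "p*(a+d) = 0" using h by auto
  have h2: "a*a = d*d" using h(3) by (simp add: mult.commute)
  have dm: "d = -a" using trace_zero[OF h1 h2] det by simp
  have rel: "a^2 + b*p = 1" using det dm by (simp add: power2_eq_square)
  obtain N :: nat where N1: "N \<ge> 1" and cs: "conj_stable c (GammaN N)"
    using rcg by (auto simp: real_congruence_group_def)
  have Nr: "real N \<noteq> 0" using N1 by simp
  have key: "\<exists>(j1::int) (j2::int). x2 = real N * j1 \<and> x3 = real N * j2"
    if M: "M \<in> GammaN N" and x: "rmul B (rmul (ofm M) B) = (x1,x2,x3,x4)" for M x1 x2 x3 x4
  proof -
    obtain M' where M': "M' \<in> GammaN N" and eq: "\<forall>z\<in>uhp. c (mob M (c z)) = mob M' z"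
      using cs M unfolding conj_stable_def by blast
    have dM: "rdet (ofm M) = 1" using M by (simp add: GammaN_def SL2Z_def rdet_ofm)
    have dM': "rdet (ofm M') = 1" using M' by (simp add: GammaN_def SL2Z_def rdet_ofm)
    have dx: "rdet (x1,x2,x3,x4) = 1" using x[symmetric] dM dB by (simp only: rdet_rmul)
    obtain m1 m2 m3 m4 where m: "ofm M' = (m1,m2,m3,m4)" by (metis prod_cases4)
    have "\<forall>z\<in>uhp. rmob (x1,x2,x3,x4) z = rmob (m1,m2,m3,m4) z"
    proof
      fix z assume z: "z \<in> uhp"
      have "rmob (x1,x2,x3,x4) z = c (rmob (ofm M) (c z))"
        using conjM[OF cfB dB cu _ z, of "ofm M"] dM x by simp
      also have "\<dots> = rmob (m1,m2,m3,m4) z" using eq z m by (simp add: mob_ofm)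
      finally show "rmob (x1,x2,x3,x4) z = rmob (m1,m2,m3,m4) z" .
    qed
    from rmob_eq[OF this] dx dM' m obtain k where
      k: "m1 = k*x1" "m2 = k*x2" "m3 = k*x3" "m4 = k*x4" by auto
    have "1 = k^2 * 1" using dM' m dx k by (simp add: power2_eq_square algebra_simps)
    then have k1: "k = 1 \<or> k = -1" by (simp add: power2_eq_1_iff)
    obtain n1 n2 n3 n4 where Mq: "M' = (n1,n2,n3,n4)" by (metis prod_cases4)
    have mn: "m2 = of_int n2" "m3 = of_int n3" using m Mq by auto
    have "int N dvd n2 \<and> int N dvd n3" using M' Mq by (auto simp: GammaN_def mid_def)
    then obtain j1 j2 where "n2 = int N * j1" "n3 = int N * j2" by blast
    then have kk: "k*x2 = real N * j1" "k*x3 = real N * j2" using mn k by auto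
    show ?thesis
    proof (cases "k = 1")
      case True then show ?thesis using kk by auto
    next
      case False then have "k = -1" using k1 by simp
      then show ?thesis using kk by (intro exI[of _ "-j1"] exI[of _ "-j2"]) simp
    qed
  qed
  have TG: "(1, int N, 0, 1) \<in> GammaN N" by (simp add: GammaN_def SL2Z_def mid_def)
  have UG: "(1, 0, int N, 1) \<in> GammaN N" by (simp add: GammaN_def SL2Z_def mid_def)
  have VG: "(1 + int N, - int N, int N, 1 - int N) \<in> GammaN N"
    by (simp add: GammaN_def SL2Z_def mid_def algebra_simps)
  have key2: "\<exists>(j1::int) (j2::int). y2 = real N * j1 \<and> y3 = real N * j2"
    if M: "M \<in> GammaN N" and y: "\<And>x1 x2 x3 x4. rmul B (rmul (ofm M) B) = (x1,x2,x3,x4) \<Longrightarrow> x2 = y2 \<and> x3 = y3"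
    for M y2 y3
  proof -
    obtain x1 x2 x3 x4 where x: "rmul B (rmul (ofm M) B) = (x1,x2,x3,x4)" by (metis prod_cases4)
    from key[OF M x] y[OF x] show ?thesis by auto
  qed
  have Zi: "x \<in> \<int>" if "\<exists>(j1::int) (j2::int). real N * x = real N * j1 \<and> y = real N * j2" for x y
    using that Nr by auto
  have Zi2: "y \<in> \<int>" if "\<exists>(j1::int) (j2::int). x = real N * j1 \<and> real N * y = real N * j2" for x y
    using that Nr by auto
  have canc: "x = y" if "real N * x = real N * y" for x y :: real using that Nr by simp
  have "\<exists>(j1::int) (j2::int). real N * (-(a^2)) = real N * j1 \<and> real N * p^2 = real N * j2"
    by (rule key2[OF TG]) (auto simp: B_def dm power2_eq_square algebra_simps)
  then obtain j1 j2 :: int where jj: "real N * (-(a^2)) = real N * j1" "real N * p^2 = real N * j2" by blast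
  have "-(a^2) = j1" "p^2 = j2" using canc[OF jj(1)] canc[OF jj(2)] by auto
  then have a2: "a^2 \<in> \<int>" and p2: "p^2 \<in> \<int>" by (metis Ints_minus Ints_of_int minus_minus)+
  have "\<exists>(j1::int) (j2::int). real N * b^2 = real N * j1 \<and> real N * (-(a^2)) = real N * j2"
    by (rule key2[OF UG]) (auto simp: B_def dm power2_eq_square algebra_simps)
  then obtain j3 :: int where "real N * b^2 = real N * j3" by blast
  then have b2: "b^2 \<in> \<int>" using Nr by auto
  have "\<exists>(j1::int) (j2::int). real N * (a+b)^2 = real N * j1 \<and> real N * (-((a-p)^2)) = real N * j2"
    by (rule key2[OF VG]) (auto simp: B_def dm power2_eq_square algebra_simps)
  then obtain j5 j6 :: int where jj': "real N * (a+b)^2 = real N * j5" "real N * (-((a-p)^2)) = real N * j6" by blast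
  have "(a+b)^2 = j5" "-((a-p)^2) = j6" using canc[OF jj'(1)] canc[OF jj'(2)] by auto
  then have ab2: "(a+b)^2 \<in> \<int>" and ap2: "(a-p)^2 \<in> \<int>" by (metis Ints_minus Ints_of_int minus_minus)+
  have "a \<in> \<int> \<and> b \<in> \<int> \<and> p \<in> \<int>" using NT_real[OF a2 b2 p2 ab2 ap2 rel] .
  then obtain ia ib ip where "a = of_int ia" "b = of_int ib" "p = of_int ip" by (meson Ints_cases)
  moreover have "ia*ia + ib*ip = 1"
  proof -
    have "real_of_int (ia*ia + ib*ip) = 1" using rel calculation by (simp add: power2_eq_square)
    then show ?thesis by linarith
  qed
  ultimately show ?thesis using cf dm by (intro exI[of _ ia] exI[of _ ib] exI[of _ ip]) auto
qed

definition psi :: "real \<Rightarrow> real \<Rightarrow> real \<Rightarrow> complex \<Rightarrow> complex" where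
  "psi a b p w = ((-2*\<i>* of_real a - of_real (b + p)) * cnj w + of_real (b - p)) /
     (of_real (p - b) * cnj w + (of_real (b + p) - 2*\<i>* of_real a))"

lemma XiY_nz:
  fixes a b p :: real
  assumes det: "a*a + b*p = 1" and z: "Im z \<ge> 0"
  shows "(of_real a * cnj z + of_real b) + \<i> * (of_real p * cnj z - of_real a) \<noteq> 0"
proof
  assume h: "(of_real a * cnj z + of_real b) + \<i> * (of_real p * cnj z - of_real a) = 0"
  have "Re ((of_real a * cnj z + of_real b) + \<i> * (of_real p * cnj z - of_real a)) = 0"
       "Im ((of_real a * cnj z + of_real b) + \<i> * (of_real p * cnj z - of_real a)) = 0" using h by simp_all
  then have r: "a * Re z + b + p * Im z = 0" and i: "- a * Im z + p * Re z - a = 0" by (simp_all add: algebra_simps)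
  have "a * (a * Re z + b + p * Im z) - p * (- a * Im z + p * Re z - a) + (p*p) * Im z * 0 = 0" using r i by simp
  then have "(a*a - p*p) * Re z + a*b + p*a + 2*a*p*Im z = 0" by (simp add: algebra_simps)
  have e1: "p * (a * Re z + b + p * Im z) + a * (- a * Im z + p * Re z - a) = 0" using r i by simp
  then have "2*a*p*Re z + b*p - a*a + (p*p - a*a) * Im z = 0" by (simp add: algebra_simps)
  have e2: "a * (a * Re z + b + p * Im z) - p * (- a * Im z + p * Re z - a) = 0" using r i by simp
  have "(a*a + p*p) * Im z = -(a*a + b*p)"
  proof -
    have "a * (- a * Im z + p * Re z - a) - p * (a * Re z + b + p * Im z) = 0" using r i by simp
    then show ?thesis by (simp add: algebra_simps)
  qed
  then have "(a*a + p*p) * Im z = -1" using det by simp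
  moreover have "(a*a + p*p) * Im z \<ge> 0" using z by simp
  ultimately show False by simp
qed

lemma mob_frac:
  fixes A B C D s t :: complex
  assumes "t \<noteq> 0"
  shows "(A * (s / t) + B) / (C * (s / t) + D) = (A * s + B * t) / (C * s + D * t)"
proof -
  have "A * (s / t) + B = (A * s + B * t) / t" "C * (s / t) + D = (C * s + D * t) / t"
    using assms by (simp_all add: field_simps)
  then show ?thesis using assms by simp
qed

lemma psiK:
  fixes a b p :: real
  assumes det: "a*a + b*p = 1" and z: "Im z \<ge> 0"
  shows "psi a b p (K z) = ((of_real a * cnj z + of_real b) - \<i> * (of_real p * cnj z - of_real a)) /
                            ((of_real a * cnj z + of_real b) + \<i> * (of_real p * cnj z - of_real a))"
proof -
  define v where "v = cnj z"
  have v0: "v - \<i> \<noteq> 0" using z by (auto simp: v_def complex_eq_iff)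
  define X where "X = of_real a * v + of_real b"
  define Y where "Y = of_real p * v - of_real a"
  have nz: "X + \<i> * Y \<noteq> 0" using XiY_nz[OF det z] by (simp add: X_def Y_def v_def)
  have q: "cnj (K z) = (v + \<i>) / (v - \<i>)" by (simp add: cnjK v_def)
  have num: "(-2*\<i>* of_real a - of_real (b + p)) * (v + \<i>) + of_real (b - p) * (v - \<i>) = -2*\<i>*(X - \<i>*Y)"
    unfolding X_def Y_def of_real_add of_real_diff using i_squared by algebra
  have den: "of_real (p - b) * (v + \<i>) + (of_real (b + p) - 2*\<i>* of_real a) * (v - \<i>) = -2*\<i>*(X + \<i>*Y)"
    unfolding X_def Y_def of_real_add of_real_diff using i_squared by algebra
  have "psi a b p (K z) = ((-2*\<i>* of_real a - of_real (b + p)) * (v + \<i>) + of_real (b - p) * (v - \<i>)) /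
            (of_real (p - b) * (v + \<i>) + (of_real (b + p) - 2*\<i>* of_real a) * (v - \<i>))"
    unfolding psi_def q using mob_frac[OF v0] by simp
  also have "\<dots> = (X - \<i>*Y) / (X + \<i>*Y)" unfolding num den using nz by simp
  finally show ?thesis by (simp add: X_def Y_def v_def)
qed

lemma psi_den_nz:
  fixes a b p :: real
  assumes det: "a*a + b*p = 1" and w: "cmod w \<le> 1"
  shows "of_real (p - b) * cnj w + (of_real (b + p) - 2*\<i>* of_real a) \<noteq> 0"
proof
  assume h: "of_real (p - b) * cnj w + (of_real (b + p) - 2*\<i>* of_real a) = 0"
  then have "cmod (of_real (b + p) - 2*\<i>* of_real a) = cmod (of_real (p - b) * cnj w)" by (metis add_eq_0_iff norm_minus_cancel)
  also have "\<dots> = \<bar>p - b\<bar> * cmod w" by (simp only: norm_mult norm_of_real complex_mod_cnj)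
  also have "\<dots> \<le> \<bar>p - b\<bar>" using w by (simp add: mult_left_le)
  finally have "(cmod (of_real (b + p) - 2*\<i>* of_real a))^2 \<le> (p - b)^2" by (metis abs_le_square_iff abs_norm_cancel power2_abs)
  moreover have "(cmod (of_real (b + p) - 2*\<i>* of_real a))^2 = (b+p)^2 + 4*a^2" unfolding cmod_power2 by (simp add: power2_eq_square)
  ultimately have "(b+p)^2 + 4*a^2 \<le> (p-b)^2" by simp
  then have "4*(a*a + b*p) \<le> 0" by (simp add: power2_eq_square algebra_simps)
  then show False using det by simp
qed

lemma psi_cont:
  fixes a b p :: real
  assumes det: "a*a + b*p = 1" and w: "cmod w \<le> 1"
  shows "isCont (psi a b p) w"
  unfolding psi_def using psi_den_nz[OF det w]
  by (intro continuous_intros) auto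

definition pto :: "complex \<Rightarrow> complex \<Rightarrow> complex option" where
  "pto u v = (if v = 0 then None else Some (u / v))"

lemma pto_eq:
  assumes "u \<noteq> 0 \<or> v \<noteq> 0" "u' \<noteq> 0 \<or> v' \<noteq> 0"
  shows "pto u v = pto u' v' \<longleftrightarrow> u * v' = u' * v"
  using assms by (auto simp: pto_def field_simps)

lemma cay_K: "cay (Some z) = K z" by (simp add: cay_def K_def)

lemma icay_pto:
  fixes X Y :: real
  assumes "X \<noteq> 0 \<or> Y \<noteq> 0"
  shows "icay ((of_real X - \<i> * of_real Y) / (of_real X + \<i> * of_real Y)) = pto (of_real X) (of_real Y)"
proof -
  have nz: "complex_of_real X + \<i> * of_real Y \<noteq> 0" using assms by (auto simp: complex_eq_iff)
  show ?thesis
  proof (cases "Y = 0")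
    case True
    then have "X \<noteq> 0" using assms by simp
    then show ?thesis using True by (simp add: icay_def pto_def)
  next
    case False
    define w where "w = (of_real X - \<i> * of_real Y) / (of_real X + \<i> * of_real Y)"
    have w1: "w \<noteq> 1"
    proof
      assume "w = 1"
      then have "of_real X - \<i> * of_real Y = of_real X + \<i> * (of_real Y :: complex)" using nz by (simp add: w_def field_simps)
      then show False using False by (simp add: complex_eq_iff)
    qed
    have a: "1 + w = 2 * of_real X / (of_real X + \<i> * of_real Y)" "1 - w = 2 * \<i> * of_real Y / (of_real X + \<i> * of_real Y)"
      using nz by (simp_all add: w_def field_simps)
    have "\<i> * (1 + w) / (1 - w) = of_real X / of_real Y" unfolding a using nz False by (simp add: field_simps)
    then show ?thesis using w1 False by (simp add: icay_def pto_def w_def[symmetric])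
  qed
qed

context
  fixes c :: "complex \<Rightarrow> complex" and a b p :: real
  assumes cf: "\<forall>u\<in>uhp. c u = rmob (a,b,p,-a) (cnj u)" and det: "a*a + b*p = 1"
begin

lemma cay_c_psi:
  assumes w: "w \<in> ball 0 1"
  shows "cay (Some (c (the (icay w)))) = psi a b p w"
proof -
  have w1: "w \<noteq> 1" using w by auto
  have icw: "icay w = Some (Ki w)" using w1 by (simp add: icay_def Ki_def)
  define u where "u = Ki w"
  have u: "u \<in> uhp" using Ki_uhp[OF w] by (simp add: u_def)
  have Ku: "K u = w" using K_Ki[OF w1] by (simp add: u_def)
  define X where "X = of_real a * cnj u + of_real b"
  define Y where "Y = of_real p * cnj u - of_real a"
  have "Im (cnj u) \<noteq> 0" using u by (simp add: uhp_def)
  then have Y0: "Y \<noteq> 0" using denom_nz[of "cnj u" a "-a" b p] det by (simp add: Y_def algebra_simps)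
  have cu: "c u = X / Y" using cf u by (simp add: X_def Y_def)
  have "cay (Some (c (the (icay w)))) = K (X / Y)" by (simp add: icw u_def[symmetric] cu cay_K)
  also have "\<dots> = (Y * (X - \<i> * Y)) / (Y * (X + \<i> * Y))"
    using Y0 by (simp add: K_def divide_simps)
  also have "\<dots> = (X - \<i> * Y) / (X + \<i> * Y)" using Y0 by simp
  also have "\<dots> = psi a b p (K u)" using psiK[OF det, of u] u by (simp add: uhp_def X_def Y_def)
  finally show ?thesis using Ku by simp
qed

lemma Lim_c:
  assumes z: "cmod \<zeta> = 1"
  shows "Lim (at \<zeta> within ball 0 1) (\<lambda>w. cay (Some (c (the (icay w))))) = psi a b p \<zeta>"
proof (rule tendsto_Lim)
  show "\<not> trivial_limit (at \<zeta> within ball 0 1)"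
    using z by (simp add: trivial_limit_within islimpt_ball)
  have "(psi a b p \<longlongrightarrow> psi a b p \<zeta>) (at \<zeta> within ball 0 1)"
    using continuous_at_imp_continuous_within[OF psi_cont[OF det, of \<zeta>]] z unfolding continuous_within by simp
  moreover have "eventually (\<lambda>w. psi a b p w = cay (Some (c (the (icay w))))) (at \<zeta> within ball 0 1)"
    unfolding eventually_at_filter by (rule always_eventually) (auto simp: cay_c_psi)
  ultimately show "((\<lambda>w. cay (Some (c (the (icay w))))) \<longlongrightarrow> psi a b p \<zeta>) (at \<zeta> within ball 0 1)"
    by (rule Lim_transform_eventually)
qed

lemma cext_real:
  fixes r :: real
  shows "cext c (Some (of_real r)) = pto (of_real (a*r + b)) (of_real (p*r - a))"
proof -
  have nu: "complex_of_real r \<notin> uhp" by (simp add: uhp_def)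
  have "(cmod (of_real r - \<i>))^2 = (cmod (of_real r + \<i>))^2" unfolding cmod_power2 by simp
  then have "cmod (of_real r - \<i>) = cmod (of_real r + \<i>)" by (metis norm_ge_zero power2_eq_iff_nonneg)
  moreover have "complex_of_real r + \<i> \<noteq> 0" by (simp add: complex_eq_iff)
  ultimately have z: "cmod (cay (Some (of_real r))) = 1" by (simp add: cay_def norm_divide)
  have nz: "a*r + b \<noteq> 0 \<or> p*r - a \<noteq> 0"
  proof (rule ccontr)
    assume "\<not> ?thesis"
    then have "a*r + b = 0" "p*r - a = 0" by auto
    then have "p*(a*r+b) - a*(p*r - a) = 0" by simp
    then have "a*a + b*p = 0" by (simp add: algebra_simps)
    then show False using det by simp
  qed
  have "cext c (Some (of_real r)) = icay (psi a b p (cay (Some (of_real r))))"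
    using nu Lim_c[OF z] by (simp add: cext_def)
  also have "psi a b p (cay (Some (of_real r))) =
     (of_real (a*r+b) - \<i> * of_real (p*r - a)) / (of_real (a*r+b) + \<i> * of_real (p*r - a))"
    unfolding cay_K using psiK[OF det, of "of_real r"] by simp
  finally show ?thesis using icay_pto[OF nz] by simp
qed

lemma cext_None: "cext c None = pto (of_real a) (of_real p)"
proof -
  have z: "cmod (cay None) = 1" by (simp add: cay_def)
  have nz: "a \<noteq> 0 \<or> p \<noteq> 0" using det by auto
  have "cext c None = icay (psi a b p 1)"
    using Lim_c[OF z] by (simp add: cext_def cay_def)
  also have "psi a b p 1 = (of_real a - \<i> * of_real p) / (of_real a + \<i> * of_real p)"
  proof -
    have d1: "complex_of_real (p - b) + (complex_of_real (b + p) - 2 * \<i> * complex_of_real a) = 2 * (of_real p - \<i> * of_real a)"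
      by (simp add: algebra_simps)
    have d2: "(- 2 * \<i> * complex_of_real a - complex_of_real (b + p)) + complex_of_real (b - p) = -2 * (of_real p + \<i> * of_real a)"
      by (simp add: algebra_simps)
    have n1: "complex_of_real p - \<i> * of_real a \<noteq> 0" using nz by (auto simp: complex_eq_iff)
    have n2: "complex_of_real a + \<i> * of_real p \<noteq> 0" using nz by (auto simp: complex_eq_iff)
    have "psi a b p 1 = (-2 * (of_real p + \<i> * of_real a)) / (2 * (of_real p - \<i> * of_real a))"
      unfolding psi_def by (simp only: complex_cnj_one mult_1_right d1 d2)
    also have "\<dots> = -(of_real p + \<i> * of_real a) / (of_real p - \<i> * of_real a)"
      using nonzero_mult_divide_mult_cancel_left[of 2 "-(of_real p + \<i> * of_real a)" "of_real p - \<i> * of_real a"]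
      by simp
    also have "\<dots> = (of_real a - \<i> * of_real p) / (of_real a + \<i> * of_real p)"
      using n1 n2 by (simp add: field_simps)
    finally show ?thesis .
  qed
  finally show ?thesis using icay_pto[OF nz] by simp
qed

end

lemma rat_cusp: "Some (complex_of_real (real_of_rat q)) \<in> cusps"
  by (auto simp: cusps_def)

lemma hstar_cases:
  assumes "x \<in> hstar"
  obtains (I) z where "z \<in> uhp" "x = Some z" | (N) "x = None" | (R) q where "x = Some (of_real (of_rat q))"
  using assms by (auto simp: hstar_def cusps_def)

lemma K_inj:
  assumes "z1 + \<i> \<noteq> 0" "z2 + \<i> \<noteq> 0" "K z1 = K z2"
  shows "z1 = z2"
proof -
  have "(z1 - \<i>) * (z2 + \<i>) = (z2 - \<i>) * (z1 + \<i>)" using assms by (simp add: K_def field_simps)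
  then have "2 * \<i> * (z1 - z2) = 0" by (simp add: algebra_simps)
  then show ?thesis by simp
qed

lemma circle_eq:
  fixes e f g x y :: real
  assumes g: "g \<noteq> 0" and ef: "e*e + f*g = 1"
  shows "g*(x^2+y^2) - 2*e*x - f = 0 \<longleftrightarrow> (x - e/g)^2 + y^2 = (1/\<bar>g\<bar>)^2"
proof -
  have "(x - e/g)^2 + y^2 - (1/\<bar>g\<bar>)^2 = (g*(x^2+y^2) - 2*e*x - f) / g"
  proof -
    have "(1/\<bar>g\<bar>)^2 = 1/g^2" by (simp add: power_divide)
    then show ?thesis using g ef by (simp add: field_simps power2_eq_square) (use ef in algebra)
  qed
  moreover have "(g*(x^2+y^2) - 2*e*x - f = 0) \<longleftrightarrow> (g*(x^2+y^2) - 2*e*x - f) / g = 0" using g by simp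
  ultimately show ?thesis by (metis eq_iff_diff_eq_0)
qed

lemma geom_circle:
  fixes e f g :: int and C :: "complex option set"
  assumes g0: "g \<noteq> 0" and ef: "e*e + f*g = 1" and C_hs: "C \<subseteq> hstar"
    and Ci: "\<And>z. z \<in> uhp \<Longrightarrow> Some z \<in> C \<longleftrightarrow>
          real_of_int g*((Re z)^2+(Im z)^2) - 2*real_of_int e*Re z - real_of_int f = 0"
    and Cr: "\<And>r::real. Some (of_real r) \<in> cusps \<Longrightarrow>
          (Some (of_real r) \<in> C \<longleftrightarrow> real_of_int g*r^2 - 2*real_of_int e*r - real_of_int f = 0)"
    and Cn: "None \<in> C \<longleftrightarrow> g = 0"
  shows "(\<exists>p q. p \<in> C \<and> q \<in> C \<and> p \<in> cusps \<and> q \<in> cusps \<and> p \<noteq> q)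
         \<and> (cay ` C) homeomorphic {0..1::real}"
proof -
  define G E F where "G = real_of_int g" and "E = real_of_int e" and "F = real_of_int f"
  have G0: "G \<noteq> 0" using g0 by (simp add: G_def)
  have ef': "E*E + F*G = 1" unfolding G_def E_def F_def using ef by (metis of_int_add of_int_mult of_int_1)
  define m where "m = E/G"
  define \<rho> where "\<rho> = 1/\<bar>G\<bar>"
  have rho: "\<rho> > 0" using G0 by (simp add: \<rho>_def)
  define Z where "Z t = complex_of_real (m + \<rho> * cos (pi*t)) + \<i> * complex_of_real (\<rho> * sin (pi*t))" for t
  define P where "P t = K (Z t)" for t
  have ReZ: "Re (Z t) = m + \<rho> * cos (pi*t)" and ImZ: "Im (Z t) = \<rho> * sin (pi*t)" for t
    by (simp_all add: Z_def)
  have circ: "G*(x^2+y^2) - 2*E*x - F = 0 \<longleftrightarrow> (x - m)^2 + y^2 = \<rho>^2" for x y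
    unfolding m_def \<rho>_def using circle_eq[OF G0 ef'] .
  define r1 r2 where "r1 = m + \<rho>" and "r2 = m - \<rho>"
  have roots: "G*r^2 - 2*E*r - F = 0 \<longleftrightarrow> r = r1 \<or> r = r2" for r
  proof -
    have "G*r^2 - 2*E*r - F = 0 \<longleftrightarrow> (r - m)^2 = \<rho>^2" using circ[of r 0] by simp
    also have "\<dots> \<longleftrightarrow> r - m = \<rho> \<or> r - m = - \<rho>" by (simp add: power2_eq_iff)
    finally show ?thesis by (auto simp: r1_def r2_def)
  qed
  have ratm: "m = real_of_rat (of_int e / of_int g)" by (simp add: m_def E_def G_def of_rat_divide)
  have ratr: "\<rho> = real_of_rat (1 / of_int \<bar>g\<bar>)" by (simp add: \<rho>_def G_def of_rat_divide del: abs_of_rat add: abs_of_rat[symmetric])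
  have r1c: "Some (complex_of_real r1) \<in> cusps"
    using rat_cusp[of "of_int e / of_int g + 1 / of_int \<bar>g\<bar>"] by (simp add: r1_def ratm ratr of_rat_add)
  have r2c: "Some (complex_of_real r2) \<in> cusps"
    using rat_cusp[of "of_int e / of_int g - 1 / of_int \<bar>g\<bar>"] by (simp add: r2_def ratm ratr of_rat_diff)
  have r1C: "Some (complex_of_real r1) \<in> C" using Cr[OF r1c] roots[of r1] by (simp add: G_def E_def F_def)
  have r2C: "Some (complex_of_real r2) \<in> C" using Cr[OF r2c] roots[of r2] by (simp add: G_def E_def F_def)
  have r12: "Some (complex_of_real r1) \<noteq> Some (complex_of_real r2)" using rho by (simp add: r1_def r2_def)
  have Z0: "Z 0 = complex_of_real r1" by (simp add: Z_def r1_def)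
  have Z1: "Z 1 = complex_of_real r2" by (simp add: Z_def r2_def)
  have Zi: "Z t + \<i> \<noteq> 0" if "t \<in> {0..1}" for t
  proof -
    have "sin (pi*t) \<ge> 0" using that by (intro sin_ge_zero) auto
    then have "\<rho> * sin (pi*t) \<ge> 0" using rho by simp
    then have "Im (Z t + \<i>) > 0" by (simp add: ImZ)
    then show ?thesis by (metis Im_complex_of_real of_real_0 less_irrefl)
  qed
  have image: "cay ` C = P ` {0..1}"
  proof
    show "cay ` C \<subseteq> P ` {0..1}"
    proof
      fix y assume "y \<in> cay ` C"
      then obtain x where x: "x \<in> C" and y: "y = cay x" by blast
      from C_hs x have "x \<in> hstar" by blast
      then show "y \<in> P ` {0..1}"
      proof (cases rule: hstar_cases)
        case (I z)
        have eqz: "(Re z - m)^2 + (Im z)^2 = \<rho>^2" using Ci[OF I(1)] x I(2) circ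
          by (simp add: G_def E_def F_def)
        define w where "w = (z - of_real m) / of_real \<rho>"
        have "(cmod (z - of_real m))^2 = \<rho>^2" using eqz by (simp add: cmod_power2)
        then have "cmod (z - of_real m) = \<rho>" using rho by (metis norm_ge_zero power2_eq_iff_nonneg less_imp_le)
        then have w1: "cmod w = 1" using rho by (simp add: w_def norm_divide)
        have "Im w > 0" using I(1) rho by (simp add: w_def uhp_def)
        then have Aw: "0 < Arg w" "Arg w < pi" using Arg_lt_pi by auto
        have "w \<noteq> 0" using w1 by auto
        then have "cis (Arg w) = w" using w1 cis_Arg[of w] by (auto simp: sgn_eq)
        then have cw: "cos (Arg w) = Re w" "sin (Arg w) = Im w" by (metis cis.sel(1) cis.sel(2))+
        define t where "t = Arg w / pi"
        have t01: "t \<in> {0..1}" using Aw by (simp add: t_def)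
        have pt: "pi * t = Arg w" by (simp add: t_def)
        have Rw: "Re w = (Re z - m)/\<rho>" "Im w = Im z / \<rho>" by (simp_all add: w_def)
        have "Z t = z" unfolding complex_eq_iff ReZ ImZ pt cw Rw using rho by simp
        then show ?thesis using t01 y I(2) by (auto simp: P_def cay_K)
      next
        case N then show ?thesis using x Cn g0 by simp
      next
        case (R q)
        have "Some (complex_of_real (of_rat q)) \<in> cusps" by (rule rat_cusp)
        from Cr[OF this] x R have "of_rat q = r1 \<or> of_rat q = r2"
          using roots by (simp add: G_def E_def F_def)
        then show ?thesis
        proof
          assume "of_rat q = r1"
          then have "y = P 0" using y R by (simp add: P_def Z0 cay_K)
          then show ?thesis by auto
        next
          assume "of_rat q = r2"
          then have "y = P 1" using y R by (simp add: P_def Z1 cay_K)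
          then show ?thesis by auto
        qed
      qed
    qed
    show "P ` {0..1} \<subseteq> cay ` C"
    proof
      fix y assume "y \<in> P ` {0..1}"
      then obtain t where t: "t \<in> {0..1}" and y: "y = P t" by blast
      consider "t = 0" | "t = 1" | "0 < t \<and> t < 1" using t by fastforce
      then show "y \<in> cay ` C"
      proof cases
        case 1 then show ?thesis using y r1C by (auto simp: P_def Z0 cay_K[symmetric])
      next
        case 2 then show ?thesis using y r2C by (auto simp: P_def Z1 cay_K[symmetric])
      next
        case 3
        have "sin (pi*t) > 0" using 3 by (intro sin_gt_zero) auto
        then have zu: "Z t \<in> uhp" using rho by (simp add: uhp_def ImZ)
        have "(Re (Z t) - m)^2 + (Im (Z t))^2 = \<rho>^2"
          by (simp add: ReZ ImZ power_mult_distrib) (metis distrib_left mult_1_right sin_cos_squared_add2 add.commute)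
        then have "Some (Z t) \<in> C" using Ci[OF zu] circ by (simp add: G_def E_def F_def)
        then show ?thesis using y by (auto simp: P_def cay_K[symmetric])
      qed
    qed
  qed
  have cont: "continuous_on {0..1} P"
    unfolding P_def K_def Z_def using Zi unfolding Z_def
    by (intro continuous_intros) auto
  have inj: "inj_on P {0..1}"
  proof
    fix s t assume s: "s \<in> {0..1}" and t: "t \<in> {0..1}" and e: "P s = P t"
    have "Z s = Z t" using K_inj[OF Zi[OF s] Zi[OF t]] e by (simp add: P_def)
    then have "Re (Z s) = Re (Z t)" by simp
    then have "cos (pi * s) = cos (pi*t)" using rho by (simp add: ReZ)
    moreover have "0 \<le> pi * s" "pi * s \<le> pi" "0 \<le> pi * t" "pi * t \<le> pi"
      using s t by (simp_all add: mult_left_le)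
    ultimately have "pi * s = pi*t" using cos_inj_pi by blast
    then show "s = t" by simp
  qed
  have "{0..1::real} homeomorphic P ` {0..1}"
    by (rule homeomorphic_compact[OF compact_Icc cont refl inj])
  then have "(cay ` C) homeomorphic {0..1::real}" using image homeomorphic_sym by metis
  then show ?thesis using r1C r2C r1c r2c r12 by blast
qed


lemma K_alt: "z + \<i> \<noteq> 0 \<Longrightarrow> K z = 1 - 2 * \<i> / (z + \<i>)"
  by (simp add: K_def field_simps)

lemma geom_line:
  fixes e f g :: int and C :: "complex option set"
  assumes g0: "g = 0" and ef: "e*e + f*g = 1" and C_hs: "C \<subseteq> hstar"
    and Ci: "\<And>z. z \<in> uhp \<Longrightarrow> Some z \<in> C \<longleftrightarrow>
          real_of_int g*((Re z)^2+(Im z)^2) - 2*real_of_int e*Re z - real_of_int f = 0"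
    and Cr: "\<And>r::real. Some (of_real r) \<in> cusps \<Longrightarrow>
          (Some (of_real r) \<in> C \<longleftrightarrow> real_of_int g*r^2 - 2*real_of_int e*r - real_of_int f = 0)"
    and Cn: "None \<in> C \<longleftrightarrow> g = 0"
  shows "(\<exists>p q. p \<in> C \<and> q \<in> C \<and> p \<in> cusps \<and> q \<in> cusps \<and> p \<noteq> q)
         \<and> (cay ` C) homeomorphic {0..1::real}"
proof -
  define E F where "E = real_of_int e" and "F = real_of_int f"
  have e1: "e*e = 1" using ef g0 by simp
  then have E0: "E \<noteq> 0" by (auto simp: E_def)
  define x0 where "x0 = -F/(2*E)"
  have lin: "- 2*E*x - F = 0 \<longleftrightarrow> x = x0" for x
    using E0 by (auto simp: x0_def field_simps)
  have x0r: "x0 = real_of_rat (- of_int f / (2 * of_int e))"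
    by (simp add: x0_def E_def F_def of_rat_divide of_rat_minus of_rat_mult)
  have x0c: "Some (complex_of_real x0) \<in> cusps" using rat_cusp x0r by simp
  have x0C: "Some (complex_of_real x0) \<in> C" using Cr[OF x0c] lin[of x0] g0 by (simp add: E_def F_def)
  have NC: "None \<in> C" using Cn g0 by simp
  have Nc: "None \<in> cusps" by (simp add: cusps_def)
  define Q where "Q u = complex_of_real u / (complex_of_real (x0*u) + \<i>)" for u
  define P where "P t = 1 - 2 * \<i> * Q (1 - t)" for t
  have Qd: "complex_of_real (x0*u) + \<i> \<noteq> 0" for u by (simp add: complex_eq_iff)
  have P1: "P 1 = cay None" by (simp add: P_def Q_def cay_def)
  have PK: "P t = K (complex_of_real x0 + \<i> * complex_of_real (t/(1-t)))" if "t < 1" for t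
  proof -
    define z where "z = complex_of_real x0 + \<i> * complex_of_real (t/(1-t))"
    have t1: "1 - t \<noteq> 0" using that by simp
    have zi: "z + \<i> = (complex_of_real (x0*(1-t)) + \<i>) / complex_of_real (1-t)"
    proof -
      have t1c: "1 - complex_of_real t \<noteq> 0" using t1 by (metis of_real_1 of_real_diff of_real_eq_0_iff)
      show ?thesis using t1c by (simp add: z_def field_simps)
    qed
    have zi0: "z + \<i> \<noteq> 0" unfolding zi using t1 Qd[of "1-t"] by (simp del: of_real_mult)
    have "K z = 1 - 2 * \<i> / (z + \<i>)" using K_alt[OF zi0] .
    also have "2 * \<i> / (z + \<i>) = 2 * \<i> * Q (1 - t)"
      unfolding zi Q_def using t1 Qd[of "1-t"] by (simp del: of_real_mult)
    finally show ?thesis by (simp add: P_def z_def)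
  qed
  have image: "cay ` C = P ` {0..1}"
  proof
    show "cay ` C \<subseteq> P ` {0..1}"
    proof
      fix y assume "y \<in> cay ` C"
      then obtain x where x: "x \<in> C" and y: "y = cay x" by blast
      from C_hs x have "x \<in> hstar" by blast
      then show "y \<in> P ` {0..1}"
      proof (cases rule: hstar_cases)
        case (I z)
        have rz: "Re z = x0" using Ci[OF I(1)] x I(2) lin g0 by (simp add: E_def F_def)
        define yy where "yy = Im z"
        have yy: "yy > 0" using I(1) by (simp add: yy_def uhp_def)
        define t where "t = yy / (1 + yy)"
        have t01: "t \<in> {0..1}" "t < 1" using yy by (auto simp: t_def field_simps)
        have "t / (1 - t) = yy" using yy by (simp add: t_def field_simps)
        then have "complex_of_real x0 + \<i> * complex_of_real (t/(1-t)) = z"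
          using rz by (simp add: complex_eq_iff yy_def)
        then have "P t = K z" using PK[OF t01(2)] by simp
        then have "y = P t" using y I(2) by (simp add: cay_K)
        then show ?thesis using t01(1) by blast
      next
        case N then show ?thesis using y P1 by (intro rev_image_eqI[of 1]) auto
      next
        case (R q)
        have "Some (complex_of_real (of_rat q)) \<in> cusps" by (rule rat_cusp)
        from Cr[OF this] x R have "of_rat q = x0" using lin g0 by (simp add: E_def F_def)
        then have "y = P 0" using y R PK[of 0] by (simp add: cay_K)
        then show ?thesis by (intro rev_image_eqI[of 0]) auto
      qed
    qed
    show "P ` {0..1} \<subseteq> cay ` C"
    proof
      fix y assume "y \<in> P ` {0..1}"
      then obtain t where t: "t \<in> {0..1}" and y: "y = P t" by blast
      consider "t = 1" | "t = 0" | "0 < t \<and> t < 1" using t by fastforce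
      then show "y \<in> cay ` C"
      proof cases
        case 1 then show ?thesis using y P1 NC by auto
      next
        case 2 then show ?thesis using y PK[of 0] x0C by (auto simp: cay_K[symmetric])
      next
        case 3
        define z where "z = complex_of_real x0 + \<i> * complex_of_real (t/(1-t))"
        have "t/(1-t) > 0" using 3 by simp
        then have zu: "z \<in> uhp" by (simp add: z_def uhp_def)
        have "Re z = x0" by (simp add: z_def)
        then have "Some z \<in> C" using Ci[OF zu] lin g0 by (simp add: E_def F_def)
        moreover have "y = cay (Some z)" using y PK 3 by (simp add: cay_K z_def)
        ultimately show ?thesis by auto
      qed
    qed
  qed
  have cont: "continuous_on {0..1} P"
  proof -
    have "complex_of_real x0 * (1 - complex_of_real u) + \<i> \<noteq> 0" for u by (simp add: complex_eq_iff)
    then show ?thesis unfolding P_def Q_def by (intro continuous_intros) auto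
  qed
  have inj: "inj_on P {0..1}"
  proof
    fix s t assume s: "s \<in> {0..1}" and t: "t \<in> {0..1}" and e: "P s = P t"
    have "Q (1 - s) = Q (1 - t)" using e by (simp add: P_def)
    then have "complex_of_real (1-s) * (complex_of_real (x0*(1-t)) + \<i>) =
               complex_of_real (1-t) * (complex_of_real (x0*(1-s)) + \<i>)"
      using Qd[of "1-s"] Qd[of "1-t"] by (simp add: Q_def field_simps)
    then have "\<i> * complex_of_real (1-s) = \<i> * complex_of_real (1-t)" by (simp add: algebra_simps)
    then show "s = t" by simp
  qed
  have "{0..1::real} homeomorphic P ` {0..1}"
    by (rule homeomorphic_compact[OF compact_Icc cont refl inj])
  then have "(cay ` C) homeomorphic {0..1::real}" using image homeomorphic_sym by metis
  moreover have "None \<noteq> Some (complex_of_real x0)" by simp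
  ultimately show ?thesis using NC x0C Nc x0c by blast
qed

lemma ident:
  fixes G1 G2 G3 G4 A Bb P z w :: complex
  shows "(G1*z + G2)*(P*w - A) - (A*w + Bb)*(G3*z + G4) =
         z*((G1*P - G3*A)*w + (-G3*Bb - G1*A)) - ((G4*A - G2*P)*w + (G4*Bb + G2*A))"
  by (simp add: algebra_simps)

theorem proposition5p3:
  assumes "real_congruence_group G c"
    and "admissible G c \<gamma>"
  shows "(\<exists>p q. p \<in> Cgamma c \<gamma> \<and> q \<in> Cgamma c \<gamma> \<and> p \<in> cusps \<and> q \<in> cusps \<and> p \<noteq> q)
         \<and> (cay ` Cgamma c \<gamma>) homeomorphic {0..1::real}"
proof -
  note rcg = assms(1)
  have cc: "complex_conjugation c" using rcg by (simp add: real_congruence_group_def)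
  have cu: "\<forall>z\<in>uhp. c z \<in> uhp" using cc by (auto simp: complex_conjugation_def)
  obtain ia ib ip :: int where rel: "ia*ia + ib*ip = 1" and
    cf: "\<forall>u\<in>uhp. c u = rmob (of_int ia, of_int ib, of_int ip, -of_int ia) (cnj u)"
    using B_integral[OF rcg] by blast
  define a b p where "a = real_of_int ia" and "b = real_of_int ib" and "p = real_of_int ip"
  have relr: "a*a + b*p = 1" unfolding a_def b_def p_def using rel by (metis of_int_add of_int_mult of_int_1)
  have cfr: "\<forall>u\<in>uhp. c u = rmob (a,b,p,-a) (cnj u)" using cf by (simp add: a_def b_def p_def)
  define B where "B = (a,b,p,-a)"
  have dB: "rdet B = -1" using relr by (simp add: B_def)
  have cfB: "\<forall>u\<in>uhp. c u = rmob B (cnj u)" using cfr by (simp add: B_def)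
  obtain g1 g2 g3 g4 where gam: "\<gamma> = (g1,g2,g3,g4)" by (metis prod_cases4)
  have adm: "\<gamma> \<in> G" "\<forall>z\<in>uhp. c (mob \<gamma> (c z)) = mob (minv \<gamma>) z"
    using assms(2) by (auto simp: admissible_def)
  have "\<gamma> \<in> SL2Z" using adm(1) rcg by (auto simp: real_congruence_group_def psl2z_subgroup_def)
  then have detg: "g1*g4 - g2*g3 = 1" by (simp add: SL2Z_def gam)
  define G1 G2 G3 G4 where "G1 = real_of_int g1" and "G2 = real_of_int g2" and "G3 = real_of_int g3" and "G4 = real_of_int g4"
  have detG: "G1*G4 - G2*G3 = 1" unfolding G1_def G2_def G3_def G4_def using detg
    by (metis of_int_diff of_int_mult of_int_1)
  have "\<forall>z\<in>uhp. rmob (rmul B (rmul (ofm \<gamma>) B)) z = rmob (ofm (minv \<gamma>)) z"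
  proof
    fix z assume z: "z \<in> uhp"
    have "rdet (ofm \<gamma>) > 0" using detG by (simp add: gam G1_def G2_def G3_def G4_def)
    then have "c (rmob (ofm \<gamma>) (c z)) = rmob (rmul B (rmul (ofm \<gamma>) B)) z"
      using conjM[OF cfB dB cu _ z] by simp
    then show "rmob (rmul B (rmul (ofm \<gamma>) B)) z = rmob (ofm (minv \<gamma>)) z"
      using adm(2) z by (simp add: mob_ofm)
  qed
  then have eqm: "\<forall>z\<in>uhp. rmob (a*(G1*a + G2*p) + b*(G3*a + G4*p), a*(G1*b - G2*a) + b*(G3*b - G4*a),
                   p*(G1*a + G2*p) - a*(G3*a + G4*p), p*(G1*b - G2*a) - a*(G3*b - G4*a)) z =
                   rmob (G4, -G2, -G3, G1) z"
    by (simp add: B_def gam G1_def G2_def G3_def G4_def algebra_simps)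
  define x1 x2 x3 x4 where "x1 = a*(G1*a + G2*p) + b*(G3*a + G4*p)" and "x2 = a*(G1*b - G2*a) + b*(G3*b - G4*a)"
    and "x3 = p*(G1*a + G2*p) - a*(G3*a + G4*p)" and "x4 = p*(G1*b - G2*a) - a*(G3*b - G4*a)"
  have dx: "x1*x4 - x2*x3 = 1" unfolding x1_def x2_def x3_def x4_def using relr detG by algebra
  have nd: "G4*G1 - (-G2)*(-G3) \<noteq> 0" using detG by (simp add: algebra_simps)
  have xd: "x1*x4 - x2*x3 \<noteq> 0" using dx by simp
  obtain k where k: "G4 = k*x1" "-G2 = k*x2" "-G3 = k*x3" "G1 = k*x4"
    using rmob_eq[OF eqm[folded x1_def x2_def x3_def x4_def] xd nd] by blast
  have kk: "k*k = 1" using dx detG k by algebra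
  define e f g h where "e = g4*ia - g2*ip" and "f = g4*ib + g2*ia" and "g = g1*ip - g3*ia" and "h = -g3*ib - g1*ia"
  define Er Fr Gr Hr where "Er = G4*a - G2*p" and "Fr = G4*b + G2*a" and "Gr = G1*p - G3*a" and "Hr = -G3*b - G1*a"
  have t1: "Fr*(Er + Hr) = 0" unfolding Er_def Fr_def Hr_def using relr detG kk k
    unfolding x1_def x2_def x3_def x4_def by algebra
  have t2: "Gr*(Er + Hr) = 0" unfolding Er_def Gr_def Hr_def using relr detG kk k
    unfolding x1_def x2_def x3_def x4_def by algebra
  have t3: "Er*Er = Hr*Hr" unfolding Er_def Hr_def using relr detG kk k
    unfolding x1_def x2_def x3_def x4_def by algebra
  have t4: "Er*Hr - Fr*Gr = -1" unfolding Er_def Fr_def Gr_def Hr_def using relr detG by algebra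
  have "Hr = -Er" using trace_zero[of Fr Er Hr Gr] t1 t2 t3 t4 by simp
  then have efr: "Er*Er + Fr*Gr = 1" using t4 by simp
  have EFG: "Er = of_int e" "Fr = of_int f" "Gr = of_int g"
    by (simp_all add: Er_def Fr_def Gr_def e_def f_def g_def a_def b_def p_def G1_def G2_def G3_def G4_def)
  have ef: "e*e + f*g = 1" using efr unfolding EFG by (metis of_int_add of_int_mult of_int_eq_1_iff)
  have Hr: "Hr = -Er" by fact
  have HE: "- G3 * b - G1 * a = - (G4 * a - G2 * p)" using Hr unfolding Hr_def Er_def .
  have c1: "of_int g1 * complex_of_real p - of_int g3 * complex_of_real a = of_int g"
    by (simp add: g_def a_def p_def)
  have c2: "- of_int g3 * complex_of_real b - of_int g1 * complex_of_real a = - (of_int e :: complex)"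
  proof -
    have "complex_of_real (- G3 * b - G1 * a) = complex_of_real (- (G4 * a - G2 * p))" using HE by simp
    then show ?thesis by (simp add: e_def a_def b_def p_def G1_def G2_def G3_def G4_def)
  qed
  have c3: "of_int g4 * complex_of_real a - of_int g2 * complex_of_real p = of_int e"
    by (simp add: e_def a_def p_def)
  have c4: "of_int g4 * complex_of_real b + of_int g2 * complex_of_real a = of_int f"
    by (simp add: f_def a_def b_def)
  have idz: "(of_int g1 * z + of_int g2) * (of_real p * w - of_real a) - (of_real a * w + of_real b) * (of_int g3 * z + of_int g4)
       = z * (of_int g * w - of_int e) - (of_int e * w + of_int f)" for z w :: complex
    using ident[of "of_int g1" z "of_int g2" "of_real p" w "of_real a" "of_real b" "of_int g3" "of_int g4"]
    unfolding c1 c2 c3 c4 by simp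
  define C where "C = Cgamma c \<gamma>"
  have C_hs: "C \<subseteq> hstar" by (auto simp: C_def Cgamma_def)
  have Ci: "Some z \<in> C \<longleftrightarrow> real_of_int g*((Re z)^2+(Im z)^2) - 2*real_of_int e*Re z - real_of_int f = 0"
    if z: "z \<in> uhp" for z
  proof -
    have zh: "Some z \<in> hstar" using z by (simp add: hstar_def)
    have imz: "Im z \<noteq> 0" using z by (simp add: uhp_def)
    have d1: "of_int g3 * z + of_int g4 \<noteq> 0"
      using denom_nz[OF imz, of G1 G4 G2 G3] detG by (simp add: G1_def G2_def G3_def G4_def)
    have imz': "Im (cnj z) \<noteq> 0" using imz by simp
    have d2: "of_real p * cnj z - of_real a \<noteq> 0"
      using denom_nz[OF imz', of a "-a" b p] relr by simp
    have m1: "mobx \<gamma> (Some z) = Some ((of_int g1 * z + of_int g2) / (of_int g3 * z + of_int g4))"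
      using d1 by (simp add: gam)
    have m2: "cext c (Some z) = Some ((of_real a * cnj z + of_real b) / (of_real p * cnj z - of_real a))"
      using z cfr by (simp add: cext_def)
    have "Some z \<in> C \<longleftrightarrow> (of_int g1 * z + of_int g2) / (of_int g3 * z + of_int g4) =
                              (of_real a * cnj z + of_real b) / (of_real p * cnj z - of_real a)"
      using zh by (simp add: C_def Cgamma_def m1 m2)
    also have "\<dots> \<longleftrightarrow> (of_int g1 * z + of_int g2) * (of_real p * cnj z - of_real a) -
                       (of_real a * cnj z + of_real b) * (of_int g3 * z + of_int g4) = 0"
      using d1 d2 by (simp add: field_simps)
    also have "\<dots> \<longleftrightarrow> z * (of_int g * cnj z - of_int e) - (of_int e * cnj z + of_int f) = 0"
      unfolding idz ..
    also have "z * (of_int g * cnj z - of_int e) - (of_int e * cnj z + of_int f) =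
        complex_of_real (real_of_int g*((Re z)^2+(Im z)^2) - 2*real_of_int e*Re z - real_of_int f)"
      by (simp add: complex_eq_iff power2_eq_square algebra_simps)
    finally show ?thesis by (simp only: of_real_eq_0_iff)
  qed
  have Cr: "Some (of_real r) \<in> C \<longleftrightarrow> real_of_int g*r^2 - 2*real_of_int e*r - real_of_int f = 0"
    if rc: "Some (of_real r) \<in> cusps" for r :: real
  proof -
    have rh: "Some (complex_of_real r) \<in> hstar" using rc by (simp add: hstar_def)
    have m1: "mobx \<gamma> (Some (of_real r)) = pto (of_int g1 * of_real r + of_int g2) (of_int g3 * of_real r + of_int g4)"
      by (simp add: gam pto_def)
    have m2: "cext c (Some (of_real r)) = pto (of_real (a*r + b)) (of_real (p*r - a))"
      by (rule cext_real[OF cfr relr])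
    have nz1: "of_int g1 * complex_of_real r + of_int g2 \<noteq> 0 \<or> of_int g3 * complex_of_real r + of_int g4 \<noteq> 0"
    proof (rule ccontr)
      assume "\<not> ?thesis"
      then have h: "G1 * r + G2 = 0" "G3 * r + G4 = 0"
        by (simp_all add: G1_def G2_def G3_def G4_def) (metis of_real_0 of_real_add of_real_eq_iff of_real_mult of_real_of_int_eq)+
      have "G1 * (G3 * r + G4) - G3 * (G1 * r + G2) = 0" using h by simp
      then have "G1*G4 - G2*G3 = 0" by (simp add: algebra_simps)
      then show False using detG by simp
    qed
    have nz2: "complex_of_real (a*r + b) \<noteq> 0 \<or> complex_of_real (p*r - a) \<noteq> 0"
    proof (rule ccontr)
      assume "\<not> ?thesis"
      then have "complex_of_real (a*r + b) = 0" "complex_of_real (p*r - a) = 0" by blast+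
      then have h: "a*r + b = 0" "p*r - a = 0" by (metis of_real_eq_0_iff)+
      have "p*(a*r+b) - a*(p*r - a) = 0" using h by simp
      then have "a*a + b*p = 0" by (simp add: algebra_simps)
      then show False using relr by simp
    qed
    have "Some (of_real r) \<in> C \<longleftrightarrow> (of_int g1 * of_real r + of_int g2) * (of_real p * of_real r - of_real a) =
         (of_real a * of_real r + of_real b) * (of_int g3 * complex_of_real r + of_int g4)"
      using rh pto_eq[OF nz1 nz2] by (simp add: C_def Cgamma_def m1 m2 mult.commute)
    also have "\<dots> \<longleftrightarrow> of_real r * (of_int g * of_real r - of_int e) - (of_int e * of_real r + of_int f) = (0::complex)"
      using idz[of "of_real r" "of_real r"] by (metis eq_iff_diff_eq_0)
    also have "of_real r * (of_int g * of_real r - of_int e) - (of_int e * of_real r + of_int f) =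
        complex_of_real (real_of_int g*r^2 - 2*real_of_int e*r - real_of_int f)"
      by (simp add: power2_eq_square algebra_simps)
    finally show ?thesis by (simp only: of_real_eq_0_iff)
  qed
  have Cn: "None \<in> C \<longleftrightarrow> g = 0"
  proof -
    have Nh: "None \<in> hstar" by (simp add: hstar_def cusps_def)
    have m1: "mobx \<gamma> None = pto (of_int g1) (of_int g3)" by (simp add: gam pto_def)
    have m2: "cext c None = pto (of_real a) (of_real p)" by (rule cext_None[OF cfr relr])
    have nz1: "(of_int g1 :: complex) \<noteq> 0 \<or> (of_int g3 :: complex) \<noteq> 0" using detg by auto
    have nz2: "complex_of_real a \<noteq> 0 \<or> complex_of_real p \<noteq> 0" using relr by auto
    have "None \<in> C \<longleftrightarrow> of_int g1 * complex_of_real p = complex_of_real a * of_int g3"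
      using Nh pto_eq[OF nz1 nz2] by (simp add: C_def Cgamma_def m1 m2)
    also have "\<dots> \<longleftrightarrow> g = 0"
    proof -
      have "of_int g1 * complex_of_real p - complex_of_real a * of_int g3 = of_int g"
        using c1 by (simp add: mult.commute)
      then show ?thesis by (metis eq_iff_diff_eq_0 of_int_eq_0_iff)
    qed
    finally show ?thesis .
  qed
  show ?thesis
  proof (cases "g = 0")
    case True
    show ?thesis using geom_line[OF True ef C_hs Ci Cr Cn] by (simp add: C_def)
  next
    case False
    show ?thesis using geom_circle[OF False ef C_hs Ci Cr Cn] by (simp add: C_def)
  qed
qed

end
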